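(* Let $\xi,\zeta$ be admissible families with $E[\operatorname{ess\,sup}_{\theta\in\mathcal T}(\xi(\theta))^-]<+\infty$, $E[\operatorname{ess\,sup}_{\theta\in\mathcal T}(\zeta(\theta))^+]<+\infty$ and $\xi(T)=\zeta(T)=0$ a.s., and let $J,J'$ be the associated families defined in the context. The following assertions are equivalent: (i) $J(0)<+\infty$; (ii) $J'(0)<+\infty$; (iii) (Mokobodski's condition) there exist two nonnegative supermartingale families $H$ and $H'$ with $H(0)<+\infty$ (or equivalently with $H'(0)<+\infty$) such that $\xi\le H-H'\le\zeta$.
   Context: Let $(\Omega,\mathcal F,(\mathcal F_t)_{0\le t\le T},P)$ be a filtered probability space satisfying the usual conditions, with $\mathcal F=\mathcal F_T$, $\mathcal F_0$ containing only sets of probability $0$ or $1$, and fixed $T\in(0,\infty)$. $\mathcal T$ is the set of stopping times with values in $[0,T]$; $\mathcal T_S=\{\theta\in\mathcal T:\theta\ge S\text{ a.s.}\}$. A family $\phi=(\phi(\theta),\theta\in\mathcal T)$ of $\overline{\mathbb R}$-valued random variables is admissible if each $\phi(\theta)$ is $\mathcal F_\theta$-measurable and $\phi(\theta)=\phi(\theta')$ a.s. on $\{\theta=\theta'\}$. Inequalities between families are meant for each $\theta\in\mathcal T$ almost surely. An admissible family $\phi$ with $E[\operatorname{ess\,sup}_\theta\phi(\theta)^-]<\infty$ is a supermartingale family if $E[\phi(\theta)\mid\mathcal F_{\theta'}]\le\phi(\theta')$ a.s. whenever $\theta\ge\theta'$ a.s. Define $J_0=J'_0=0$ and $J_{n+1}(\theta)=\operatorname{ess\,sup}_{\tau\in\mathcal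 T_\theta}E[J'_n(\tau)+\xi(\tau)\mid\mathcal F_\theta]$, $J'_{n+1}(\theta)=\operatorname{ess\,sup}_{\sigma\in\mathcal T_\theta}E[J_n(\sigma)-\zeta(\sigma)\mid\mathcal F_\theta]$, and $J(\theta)=\limsup_n J_n(\theta)$, $J'(\theta)=\limsup_n J'_n(\theta)$ (these are $[0,+\infty]$-valued). *)

theory Defs
  imports "HOL-Probability.Probability"
begin

text \<open>Random variables are extended-real valued; a family is indexed by random times
  (functions 'a => real); only stopping times with values in [0,Tm] matter.\<close>

type_synonym 'a family = "('a \<Rightarrow> real) \<Rightarrow> 'a \<Rightarrow> ereal"

definition Fsig :: "'a measure \<Rightarrow> (real \<Rightarrow> 'a measure) \<Rightarrow> ('a \<Rightarrow> real) \<Rightarrow> 'a measure" where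
  "Fsig M F \<theta> = filtration.pre_sigma (space M) F \<theta>"

definition STs :: "'a measure \<Rightarrow> (real \<Rightarrow> 'a measure) \<Rightarrow> real \<Rightarrow> ('a \<Rightarrow> real) set" where
  "STs M F Tm = {\<tau>. stopping_time F \<tau> \<and> (\<forall>\<omega>\<in>space M. 0 \<le> \<tau> \<omega> \<and> \<tau> \<omega> \<le> Tm)}"

definition STs_from :: "'a measure \<Rightarrow> (real \<Rightarrow> 'a measure) \<Rightarrow> real \<Rightarrow> ('a \<Rightarrow> real) \<Rightarrow> ('a \<Rightarrow> real) set" where
  "STs_from M F Tm S = {\<theta> \<in> STs M F Tm. AE \<omega> in M. S \<omega> \<le> \<theta> \<omega>}"

text \<open>Generalized conditional expectation of an extended-real random variable:
  E[X^+|N] - E[X^-|N] (well defined whenever one of the two parts is finite).\<close>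
definition ereal_cond_exp :: "'a measure \<Rightarrow> 'a measure \<Rightarrow> ('a \<Rightarrow> ereal) \<Rightarrow> 'a \<Rightarrow> ereal" where
  "ereal_cond_exp M N X = (\<lambda>\<omega>.
      enn2ereal (nn_cond_exp M N (\<lambda>x. e2ennreal (X x)) \<omega>)
    - enn2ereal (nn_cond_exp M N (\<lambda>x. e2ennreal (- X x)) \<omega>))"

definition is_esssup_fam :: "'a measure \<Rightarrow> 'a measure \<Rightarrow> ('a \<Rightarrow> ereal) set \<Rightarrow> ('a \<Rightarrow> ereal) \<Rightarrow> bool" where
  "is_esssup_fam M N S Y \<longleftrightarrow>
     Y \<in> borel_measurable N \<and>
     (\<forall>X\<in>S. AE \<omega> in M. X \<omega> \<le> Y \<omega>) \<and>
     (\<forall>Z\<in>borel_measurable N. (\<forall>X\<in>S. AE \<omega> in M. X \<omega> \<le> Z \<omega>) \<longrightarrow> (AE \<omega> in M. Y \<omega> \<le> Z \<omega>))"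

definition esssup_fam :: "'a measure \<Rightarrow> 'a measure \<Rightarrow> ('a \<Rightarrow> ereal) set \<Rightarrow> 'a \<Rightarrow> ereal" where
  "esssup_fam M N S = (SOME Y. is_esssup_fam M N S Y)"

definition admissible :: "'a measure \<Rightarrow> (real \<Rightarrow> 'a measure) \<Rightarrow> real \<Rightarrow> 'a family \<Rightarrow> bool" where
  "admissible M F Tm \<phi> \<longleftrightarrow>
     (\<forall>\<theta>\<in>STs M F Tm. \<phi> \<theta> \<in> borel_measurable (Fsig M F \<theta>)) \<and>
     (\<forall>\<theta>\<in>STs M F Tm. \<forall>\<theta>'\<in>STs M F Tm. AE \<omega> in M. \<theta> \<omega> = \<theta>' \<omega> \<longrightarrow> \<phi> \<theta> \<omega> = \<phi> \<theta>' \<omega>)"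

definition neg_part_integrable :: "'a measure \<Rightarrow> (real \<Rightarrow> 'a measure) \<Rightarrow> real \<Rightarrow> 'a family \<Rightarrow> bool" where
  "neg_part_integrable M F Tm \<phi> \<longleftrightarrow>
     (\<integral>\<^sup>+ \<omega>. e2ennreal (esssup_fam M M {(\<lambda>x. max 0 (- \<phi> \<theta> x)) | \<theta>. \<theta> \<in> STs M F Tm} \<omega>) \<partial>M) < \<infinity>"

definition pos_part_integrable :: "'a measure \<Rightarrow> (real \<Rightarrow> 'a measure) \<Rightarrow> real \<Rightarrow> 'a family \<Rightarrow> bool" where
  "pos_part_integrable M F Tm \<phi> \<longleftrightarrow>
     (\<integral>\<^sup>+ \<omega>. e2ennreal (esssup_fam M M {(\<lambda>x. max 0 (\<phi> \<theta> x)) | \<theta>. \<theta> \<in> STs M F Tm} \<omega>) \<partial>M) < \<infinity>"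

definition supermart_family :: "'a measure \<Rightarrow> (real \<Rightarrow> 'a measure) \<Rightarrow> real \<Rightarrow> 'a family \<Rightarrow> bool" where
  "supermart_family M F Tm \<phi> \<longleftrightarrow>
     admissible M F Tm \<phi> \<and> neg_part_integrable M F Tm \<phi> \<and>
     (\<forall>\<theta>\<in>STs M F Tm. \<forall>\<theta>'\<in>STs M F Tm. (AE \<omega> in M. \<theta>' \<omega> \<le> \<theta> \<omega>) \<longrightarrow>
        (AE \<omega> in M. ereal_cond_exp M (Fsig M F \<theta>') (\<phi> \<theta>) \<omega> \<le> \<phi> \<theta>' \<omega>))"

fun Jpair :: "'a measure \<Rightarrow> (real \<Rightarrow> 'a measure) \<Rightarrow> real \<Rightarrow> 'a family \<Rightarrow> 'a family \<Rightarrow> nat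
    \<Rightarrow> 'a family \<times> 'a family" where
  "Jpair M F Tm \<xi> \<zeta> 0 = ((\<lambda>\<theta> \<omega>. 0), (\<lambda>\<theta> \<omega>. 0))"
| "Jpair M F Tm \<xi> \<zeta> (Suc n) =
    ((\<lambda>\<theta>. esssup_fam M (Fsig M F \<theta>)
        {ereal_cond_exp M (Fsig M F \<theta>) (\<lambda>\<omega>. snd (Jpair M F Tm \<xi> \<zeta> n) \<tau> \<omega> + \<xi> \<tau> \<omega>)
          | \<tau>. \<tau> \<in> STs_from M F Tm \<theta>}),
     (\<lambda>\<theta>. esssup_fam M (Fsig M F \<theta>)
        {ereal_cond_exp M (Fsig M F \<theta>) (\<lambda>\<omega>. fst (Jpair M F Tm \<xi> \<zeta> n) \<sigma> \<omega> - \<zeta> \<sigma> \<omega>)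
          | \<sigma>. \<sigma> \<in> STs_from M F Tm \<theta>}))"

definition Jn :: "'a measure \<Rightarrow> (real \<Rightarrow> 'a measure) \<Rightarrow> real \<Rightarrow> 'a family \<Rightarrow> 'a family \<Rightarrow> nat \<Rightarrow> 'a family" where
  "Jn M F Tm \<xi> \<zeta> n = fst (Jpair M F Tm \<xi> \<zeta> n)"

definition J'n :: "'a measure \<Rightarrow> (real \<Rightarrow> 'a measure) \<Rightarrow> real \<Rightarrow> 'a family \<Rightarrow> 'a family \<Rightarrow> nat \<Rightarrow> 'a family" where
  "J'n M F Tm \<xi> \<zeta> n = snd (Jpair M F Tm \<xi> \<zeta> n)"

definition Jlim :: "'a measure \<Rightarrow> (real \<Rightarrow> 'a measure) \<Rightarrow> real \<Rightarrow> 'a family \<Rightarrow> 'a family \<Rightarrow> 'a family" where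
  "Jlim M F Tm \<xi> \<zeta> = (\<lambda>\<theta> \<omega>. limsup (\<lambda>n. Jn M F Tm \<xi> \<zeta> n \<theta> \<omega>))"

definition J'lim :: "'a measure \<Rightarrow> (real \<Rightarrow> 'a measure) \<Rightarrow> real \<Rightarrow> 'a family \<Rightarrow> 'a family \<Rightarrow> 'a family" where
  "J'lim M F Tm \<xi> \<zeta> = (\<lambda>\<theta> \<omega>. limsup (\<lambda>n. J'n M F Tm \<xi> \<zeta> n \<theta> \<omega>))"

definition std_setting :: "'a measure \<Rightarrow> (real \<Rightarrow> 'a measure) \<Rightarrow> real \<Rightarrow> bool" where
  "std_setting M F Tm \<longleftrightarrow>
     prob_space M \<and> 0 < Tm \<and>
     filtration (space M) F \<and>
     (\<forall>t. sets (F t) \<subseteq> sets M) \<and>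
     sets (F Tm) = sets M \<and>
     (\<forall>A\<in>sets (F 0). emeasure M A = 0 \<or> emeasure M A = 1) \<and>
     (\<forall>N\<in>null_sets M. \<forall>A. A \<subseteq> N \<longrightarrow> A \<in> sets (F 0)) \<and>
     (\<forall>t. 0 \<le> t \<and> t < Tm \<longrightarrow> sets (F t) = (\<Inter>s\<in>{t<..}. sets (F s)))"

end

theory Submission
  imports Defs
begin

definition phi :: "ereal \<Rightarrow> real" where
  "phi x = (if x = \<infinity> then pi/2 else if x = -\<infinity> then -pi/2 else arctan (real_of_ereal x))"

lemma phi_meas[measurable]: "phi \<in> borel_measurable borel"
  unfolding phi_def by measurable

lemma phi_strict: "x < y \<Longrightarrow> phi x < phi y"
  using arctan_ubound arctan_lbound
  by (cases x; cases y) (auto simp: phi_def arctan_less_iff)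

lemma phi_mono: "x \<le> y \<Longrightarrow> phi x \<le> phi y"
  using phi_strict[of x y] by (auto simp: le_less)

lemma phi_inj: "phi x = phi y \<Longrightarrow> x = y"
  using phi_strict[of x y] phi_strict[of y x] by (cases x y rule: linorder_cases) auto

lemma phi_bound: "\<bar>phi x\<bar> \<le> 2"
proof -
  have "\<bar>arctan r\<bar> \<le> 2" for r using arctan_ubound[of r] arctan_lbound[of r] pi_less_4 by auto
  then show ?thesis using pi_less_4 pi_gt3 by (auto simp: phi_def)
qed

lemma esssup_exists:
  fixes S :: "('a \<Rightarrow> ereal) set"
  assumes fm: "finite_measure M" and sub: "subalgebra M N"
    and meas: "\<And>X. X \<in> S \<Longrightarrow> X \<in> borel_measurable N"
  shows "\<exists>C. countable C \<and> C \<subseteq> S \<and> is_esssup_fam M N S (\<lambda>\<omega>. SUP X\<in>C. X \<omega>)"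
proof -
  interpret finite_measure M by fact
  define sp where "sp C = (\<lambda>\<omega>. SUP X\<in>C. X \<omega>)" for C :: "('a \<Rightarrow> ereal) set"
  define v where "v C = (\<integral>\<omega>. phi (sp C \<omega>) \<partial>M)" for C
  let ?K = "{C. countable C \<and> C \<subseteq> S}"
  have spN: "sp C \<in> borel_measurable N" if "C \<in> ?K" for C
    using that meas unfolding sp_def by (intro borel_measurable_SUP) auto
  have spM: "sp C \<in> borel_measurable M" if "C \<in> ?K" for C
    using measurable_from_subalg[OF sub spN[OF that]] .
  have int: "integrable M (\<lambda>\<omega>. phi (sp C \<omega>))" if "C \<in> ?K" for C
    by (rule integrable_const_bound[where B=2]) (auto simp: phi_bound intro: measurable_compose[OF spM[OF that] phi_meas])
  have vmono: "v C \<le> v D" if "C \<in> ?K" "D \<in> ?K" "C \<subseteq> D" for C D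
    unfolding v_def using that
    by (intro integral_mono[OF int int]) (auto simp: sp_def intro!: phi_mono SUP_subset_mono)
  have vb: "v C \<le> 2 * measure M (space M)" if "C \<in> ?K" for C
  proof -
    have "v C \<le> (\<integral>\<omega>. 2 \<partial>M)" unfolding v_def
      by (rule integral_mono[OF int[OF that]]) (use phi_bound in \<open>auto simp: abs_le_iff\<close>)
    then show ?thesis by simp
  qed
  have bdd: "bdd_above (v ` ?K)" using vb by (auto intro!: bdd_aboveI)
  define s where "s = Sup (v ` ?K)"
  have K0: "{} \<in> ?K" by simp
  have "\<forall>k::nat. \<exists>C\<in>?K. s - 1/Suc k < v C"
  proof
    fix k :: nat
    have "s - 1/Suc k < s" by simp
    then show "\<exists>C\<in>?K. s - 1/Suc k < v C" unfolding s_def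
      using less_cSupD[of "v ` ?K"] K0 by blast
  qed
  then obtain Cs where Cs: "\<And>k. Cs k \<in> ?K" "\<And>k. s - 1/Suc k < v (Cs k)" by metis
  define C where "C = (\<Union>k. Cs k)"
  have CK: "C \<in> ?K" using Cs(1) unfolding C_def by auto
  have vC_le: "v C \<le> s" unfolding s_def using bdd CK by (intro cSup_upper) auto
  have vC: "v C = s"
  proof (rule ccontr)
    assume "v C \<noteq> s"
    then have "0 < s - v C" using vC_le by simp
    then obtain k where k: "inverse (real (Suc k)) < s - v C" using reals_Archimedean by blast
    have "v (Cs k) \<le> v C" using vmono[OF Cs(1) CK] unfolding C_def by auto
    then have "s - 1/Suc k < v C" using Cs(2)[of k] by linarith
    with k show False by (simp add: inverse_eq_divide)
  qed
  have "is_esssup_fam M N S (sp C)"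
    unfolding is_esssup_fam_def
  proof (intro conjI ballI allI impI)
    show "sp C \<in> borel_measurable N" using spN[OF CK] .
  next
    fix X assume X: "X \<in> S"
    define D where "D = insert X C"
    have DK: "D \<in> ?K" using CK X unfolding D_def by auto
    have "v D \<le> s" unfolding s_def using bdd DK by (intro cSup_upper) auto
    moreover have "v C \<le> v D" using vmono[OF CK DK] unfolding D_def by auto
    ultimately have eq: "v C = v D" using vC by simp
    have "AE \<omega> in M. phi (sp C \<omega>) = phi (sp D \<omega>)"
      by (rule integral_ineq_eq_0_then_AE[OF _ int[OF CK] int[OF DK]])
         (use eq in \<open>auto simp: v_def sp_def D_def intro!: phi_mono SUP_subset_mono\<close>)
    then show "AE \<omega> in M. X \<omega> \<le> sp C \<omega>"
    proof (eventually_elim)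
      case (elim \<omega>)
      then have "sp C \<omega> = sp D \<omega>" by (rule phi_inj)
      moreover have "X \<omega> \<le> sp D \<omega>" unfolding sp_def D_def by (auto intro: SUP_upper)
      ultimately show ?case by simp
    qed
  next
    fix Z assume Z: "Z \<in> borel_measurable N" and up: "\<forall>X\<in>S. AE \<omega> in M. X \<omega> \<le> Z \<omega>"
    have "AE \<omega> in M. \<forall>X\<in>C. X \<omega> \<le> Z \<omega>"
      using CK up by (subst AE_ball_countable) auto
    then show "AE \<omega> in M. sp C \<omega> \<le> Z \<omega>"
      by eventually_elim (auto simp: sp_def intro: SUP_least)
  qed
  then show ?thesis using CK unfolding sp_def by blast
qed

locale ess =
  fixes M N :: "'a measure"
  assumes fm: "finite_measure M" and sub: "subalgebra M N"
begin

context
  fixes S :: "('a \<Rightarrow> ereal) set"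
  assumes meas: "\<And>X. X \<in> S \<Longrightarrow> X \<in> borel_measurable N"
begin

lemma esssup_is: "is_esssup_fam M N S (esssup_fam M N S)"
proof -
  obtain C where "is_esssup_fam M N S (\<lambda>\<omega>. SUP X\<in>C. X \<omega>)"
    using esssup_exists[OF fm sub meas] by blast
  then show ?thesis unfolding esssup_fam_def by (rule someI[where P="is_esssup_fam M N S"])
qed

lemma esssup_meas[measurable]: "esssup_fam M N S \<in> borel_measurable N"
  using esssup_is unfolding is_esssup_fam_def by blast

lemma esssup_measM: "esssup_fam M N S \<in> borel_measurable M"
  using measurable_from_subalg[OF sub esssup_meas] .

lemma esssup_upper: "X \<in> S \<Longrightarrow> AE \<omega> in M. X \<omega> \<le> esssup_fam M N S \<omega>"
  using esssup_is unfolding is_esssup_fam_def by blast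

lemma esssup_least: "Z \<in> borel_measurable N \<Longrightarrow> (\<And>X. X \<in> S \<Longrightarrow> AE \<omega> in M. X \<omega> \<le> Z \<omega>)
   \<Longrightarrow> AE \<omega> in M. esssup_fam M N S \<omega> \<le> Z \<omega>"
  using esssup_is unfolding is_esssup_fam_def by blast

lemma esssup_countable: "\<exists>C. countable C \<and> C \<subseteq> S \<and> (AE \<omega> in M. esssup_fam M N S \<omega> = (SUP X\<in>C. X \<omega>))"
proof -
  obtain C where C: "countable C" "C \<subseteq> S" and iss: "is_esssup_fam M N S (\<lambda>\<omega>. SUP X\<in>C. X \<omega>)"
    using esssup_exists[OF fm sub meas] by blast
  have "AE \<omega> in M. esssup_fam M N S \<omega> \<le> (SUP X\<in>C. X \<omega>)"
    using iss unfolding is_esssup_fam_def by (intro esssup_least) auto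
  moreover have "AE \<omega> in M. (SUP X\<in>C. X \<omega>) \<le> esssup_fam M N S \<omega>"
    using iss esssup_is unfolding is_esssup_fam_def by blast
  ultimately show ?thesis using C by (intro exI[of _ C]) auto
qed

lemma esssup_seq:
  assumes ne: "S \<noteq> {}"
  shows "\<exists>f::nat \<Rightarrow> 'a \<Rightarrow> ereal. (\<forall>k. f k \<in> S) \<and> (AE \<omega> in M. esssup_fam M N S \<omega> = (SUP k. f k \<omega>))"
proof -
  obtain C where C: "countable C" "C \<subseteq> S" and ae: "AE \<omega> in M. esssup_fam M N S \<omega> = (SUP X\<in>C. X \<omega>)"
    using esssup_countable by blast
  obtain X0 where X0: "X0 \<in> S" using ne by blast
  define D where "D = insert X0 C"
  have D: "countable D" "D \<noteq> {}" "D \<subseteq> S" using C X0 unfolding D_def by auto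
  define f where "f = from_nat_into D"
  have rf: "range f = D" unfolding f_def using D by (simp add: range_from_nat_into)
  have "AE \<omega> in M. esssup_fam M N S \<omega> = (SUP k. f k \<omega>)"
    using ae esssup_upper[OF X0]
  proof eventually_elim
    case (elim \<omega>)
    have "(SUP k. f k \<omega>) = (SUP X\<in>range f. X \<omega>)" by (simp only: image_image)
    also have "\<dots> = sup (X0 \<omega>) (SUP X\<in>C. X \<omega>)" unfolding rf D_def by (simp only: SUP_insert)
    also have "\<dots> = (SUP X\<in>C. X \<omega>)" using elim by (intro sup_absorb2) simp
    also have "\<dots> = esssup_fam M N S \<omega>" using elim(1) by simp
    finally show ?case by simp
  qed
  moreover have "\<forall>k. f k \<in> S" using rf D by auto
  ultimately have "(\<forall>k. f k \<in> S) \<and> (AE \<omega> in M. esssup_fam M N S \<omega> = (SUP k. f k \<omega>))" by simp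
  then show ?thesis apply - apply (rule exI[where x=f]) apply assumption done
qed

lemma esssup_directed_seq:
  assumes ne: "S \<noteq> {}"
    and dir: "\<And>X Y. X \<in> S \<Longrightarrow> Y \<in> S \<Longrightarrow> \<exists>Z\<in>S. AE \<omega> in M. max (X \<omega>) (Y \<omega>) \<le> Z \<omega>"
  shows "\<exists>f::nat \<Rightarrow> 'a \<Rightarrow> ereal. (\<forall>k. f k \<in> S) \<and> (AE \<omega> in M. incseq (\<lambda>k. f k \<omega>))
          \<and> (AE \<omega> in M. esssup_fam M N S \<omega> = (SUP k. f k \<omega>))"
proof -
  obtain g :: "nat \<Rightarrow> 'a \<Rightarrow> ereal" where g: "\<And>k. g k \<in> S" and ae: "AE \<omega> in M. esssup_fam M N S \<omega> = (SUP k. g k \<omega>)"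
    using esssup_seq[OF ne] by blast
  define nxt where "nxt = (\<lambda>k Z. SOME W. W \<in> S \<and> (AE \<omega> in M. max (Z \<omega>) (g (Suc k) \<omega>) \<le> W \<omega>))"
  define d where "d = rec_nat (g 0) nxt"
  have d0: "d 0 = g 0" and dS: "d (Suc k) = nxt k (d k)" for k unfolding d_def by simp_all
  have nxt: "nxt k Z \<in> S \<and> (AE \<omega> in M. max (Z \<omega>) (g (Suc k) \<omega>) \<le> nxt k Z \<omega>)" if "Z \<in> S" for k Z
  proof -
    have "\<exists>W. W \<in> S \<and> (AE \<omega> in M. max (Z \<omega>) (g (Suc k) \<omega>) \<le> W \<omega>)"
      using dir[OF that g] by blast
    then show ?thesis unfolding nxt_def by (rule someI_ex)
  qed
  have dkS: "d k \<in> S" for k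
  proof (induction k)
    case 0 show ?case using d0 g by simp
  next
    case (Suc k) show ?case unfolding dS using nxt[OF Suc] by blast
  qed
  have dprop: "d k \<in> S \<and> (AE \<omega> in M. max (d k \<omega>) (g (Suc k) \<omega>) \<le> d (Suc k) \<omega>)" for k
    using nxt[OF dkS[of k], of k] dkS[of k] unfolding dS[of k] by blast
  have dS': "\<forall>k. d k \<in> S" using dprop by blast
  have "AE \<omega> in M. \<forall>k. max (d k \<omega>) (g (Suc k) \<omega>) \<le> d (Suc k) \<omega>"
    using dprop by (simp add: AE_all_countable)
  moreover have "AE \<omega> in M. \<forall>k. d k \<omega> \<le> esssup_fam M N S \<omega>"
    using dS' esssup_upper by (simp add: AE_all_countable)
  ultimately have "AE \<omega> in M. incseq (\<lambda>k. d k \<omega>) \<and> esssup_fam M N S \<omega> = (SUP k. d k \<omega>)"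
    using ae
  proof eventually_elim
    case (elim \<omega>)
    have inc: "incseq (\<lambda>k. d k \<omega>)" by (rule incseq_SucI) (use elim in auto)
    have gd: "g k \<omega> \<le> d k \<omega>" for k
      by (cases k) (use elim d0 in auto)
    have "esssup_fam M N S \<omega> \<le> (SUP k. d k \<omega>)"
      unfolding elim(3) by (rule SUP_mono) (use gd in blast)
    moreover have "(SUP k. d k \<omega>) \<le> esssup_fam M N S \<omega>"
      using elim(2) by (auto intro: SUP_least)
    ultimately show ?case using inc by auto
  qed
  then have "AE \<omega> in M. incseq (\<lambda>k. d k \<omega>)" "AE \<omega> in M. esssup_fam M N S \<omega> = (SUP k. d k \<omega>)"
    by (auto elim: eventually_mono)
  with dS' have "(\<forall>k. d k \<in> S) \<and> (AE \<omega> in M. incseq (\<lambda>k. d k \<omega>))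
          \<and> (AE \<omega> in M. esssup_fam M N S \<omega> = (SUP k. d k \<omega>))" by simp
  then show ?thesis apply - apply (rule exI[where x=d]) apply assumption done
qed

end
end

locale stdset =
  fixes M :: "'a measure" and F :: "real \<Rightarrow> 'a measure" and Tm :: real
  assumes std: "std_setting M F Tm"
begin

lemma prob: "prob_space M" and Tm_pos: "0 < Tm" and filt: "filtration (space M) F"
  and subF: "sets (F t) \<subseteq> sets M" and FT: "sets (F Tm) = sets M"
  and F0null: "N \<in> null_sets M \<Longrightarrow> A \<subseteq> N \<Longrightarrow> A \<in> sets (F 0)"
  using std unfolding std_setting_def by auto

interpretation prob_space M by (rule prob)

lemma spaceF[simp]: "space (F t) = space M"
  using filtration.space_F[OF filt] .

lemma monoF: "s \<le> t \<Longrightarrow> sets (F s) \<subseteq> sets (F t)"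
  using filtration.sets_F_mono[OF filt] by blast

lemma FgeT: "Tm \<le> t \<Longrightarrow> sets (F t) = sets M"
  using monoF[of Tm t] subF[of t] FT by auto

lemma ST_stop: "\<theta> \<in> STs M F Tm \<Longrightarrow> stopping_time F \<theta>"
  unfolding STs_def by auto

lemma ST_bnd: "\<theta> \<in> STs M F Tm \<Longrightarrow> \<omega> \<in> space M \<Longrightarrow> 0 \<le> \<theta> \<omega> \<and> \<theta> \<omega> \<le> Tm"
  unfolding STs_def by auto

lemma const_ST: "0 \<le> c \<Longrightarrow> c \<le> Tm \<Longrightarrow> (\<lambda>_. c) \<in> STs M F Tm"
  unfolding STs_def by (auto intro: stopping_time_const)

lemma Tm_ST: "(\<lambda>_. Tm) \<in> STs M F Tm" using const_ST Tm_pos by simp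
lemma zero_ST: "(\<lambda>_. 0) \<in> STs M F Tm" using const_ST Tm_pos by simp

lemma ST_meas: "\<theta> \<in> STs M F Tm \<Longrightarrow> \<theta> \<in> borel_measurable M"
  by (rule measurable_stopping_time[OF ST_stop]) (auto simp: subF)

lemma ST_le_pred: "\<theta> \<in> STs M F Tm \<Longrightarrow> {\<omega>\<in>space M. \<theta> \<omega> \<le> t} \<in> sets (F t)"
  using stopping_timeD[OF ST_stop] unfolding pred_def by simp

lemma sets_Fsig: "\<theta> \<in> STs M F Tm \<Longrightarrow> sets (Fsig M F \<theta>) = {A. \<forall>t. {\<omega>\<in>A. \<theta> \<omega> \<le> t} \<in> sets (F t)}"
  unfolding Fsig_def using filtration.sets_pre_sigma[OF filt ST_stop] .

lemma space_Fsig[simp]: "space (Fsig M F \<theta>) = space M"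
  unfolding Fsig_def using filtration.space_pre_sigma[OF filt] .

lemma Fsig_sub: assumes "\<theta> \<in> STs M F Tm" shows "sets (Fsig M F \<theta>) \<subseteq> sets M"
proof
  fix A assume A: "A \<in> sets (Fsig M F \<theta>)"
  then have "A \<subseteq> space M" using sets.sets_into_space[OF A] by simp
  then have "{\<omega>\<in>A. \<theta> \<omega> \<le> Tm} = A" using ST_bnd[OF assms] by auto
  moreover have "{\<omega>\<in>A. \<theta> \<omega> \<le> Tm} \<in> sets (F Tm)" using A sets_Fsig[OF assms] by auto
  ultimately show "A \<in> sets M" using FT by simp
qed

lemma subalg: "\<theta> \<in> STs M F Tm \<Longrightarrow> subalgebra M (Fsig M F \<theta>)"
  unfolding subalgebra_def using Fsig_sub by simp

lemma sfs: "\<theta> \<in> STs M F Tm \<Longrightarrow> sigma_finite_subalgebra M (Fsig M F \<theta>)"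
  by (intro finite_measure_subalgebra_is_sigma_finite finite_measure_subalgebra.intro
       finite_measure_subalgebra_axioms.intro subalg) (rule finite_measure_axioms)

lemma essF: "\<theta> \<in> STs M F Tm \<Longrightarrow> ess M (Fsig M F \<theta>)"
  by (intro ess.intro subalg) (rule finite_measure_axioms)

lemma ess_M: "ess M M"
  by (intro ess.intro) (auto simp: subalgebra_def finite_measure_axioms)

lemma Fsig_measM: "\<theta> \<in> STs M F Tm \<Longrightarrow> f \<in> borel_measurable (Fsig M F \<theta>) \<Longrightarrow> f \<in> borel_measurable M"
  using measurable_from_subalg[OF subalg] by blast

lemma null_F: assumes "N \<in> null_sets M" "A \<subseteq> N" "\<And>\<omega>. \<omega> \<in> A \<Longrightarrow> 0 \<le> t"
  shows "A \<in> sets (F t)"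
proof (cases "0 \<le> t")
  case True then show ?thesis using F0null[OF assms(1,2)] monoF[of 0 t] by auto
next
  case False then have "A = {}" using assms(3) by auto
  then show ?thesis by simp
qed

lemma Fsig_mono:
  assumes th: "\<theta> \<in> STs M F Tm" and th': "\<theta>' \<in> STs M F Tm" and le: "AE \<omega> in M. \<theta>' \<omega> \<le> \<theta> \<omega>"
  shows "sets (Fsig M F \<theta>') \<subseteq> sets (Fsig M F \<theta>)"
proof
  fix A assume A: "A \<in> sets (Fsig M F \<theta>')"
  have Asp: "A \<subseteq> space M" using sets.sets_into_space[OF A] by simp
  obtain N where N: "N \<in> null_sets M" "{\<omega>\<in>space M. \<not> \<theta>' \<omega> \<le> \<theta> \<omega>} \<subseteq> N"
    using le by (auto elim!: AE_E)
  show "A \<in> sets (Fsig M F \<theta>)"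
    unfolding sets_Fsig[OF th]
  proof (intro CollectI allI)
    fix t
    have eq: "{\<omega>\<in>A. \<theta> \<omega> \<le> t} = ({\<omega>\<in>A. \<theta>' \<omega> \<le> t} \<inter> {\<omega>\<in>space M. \<theta> \<omega> \<le> t}) \<union> {\<omega>\<in>A. \<theta> \<omega> \<le> t \<and> t < \<theta>' \<omega>}"
      using Asp by auto
    have 1: "{\<omega>\<in>A. \<theta>' \<omega> \<le> t} \<in> sets (F t)" using A sets_Fsig[OF th'] by auto
    have 2: "{\<omega>\<in>space M. \<theta> \<omega> \<le> t} \<in> sets (F t)" using ST_le_pred[OF th] .
    have 3: "{\<omega>\<in>A. \<theta> \<omega> \<le> t \<and> t < \<theta>' \<omega>} \<in> sets (F t)"
    proof (rule null_F[OF N(1)])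
      show "{\<omega>\<in>A. \<theta> \<omega> \<le> t \<and> t < \<theta>' \<omega>} \<subseteq> N" using N(2) Asp by auto
      fix \<omega> assume "\<omega> \<in> {\<omega>\<in>A. \<theta> \<omega> \<le> t \<and> t < \<theta>' \<omega>}"
      then show "0 \<le> t" using Asp ST_bnd[OF th, of \<omega>] by auto
    qed
    show "{\<omega>\<in>A. \<theta> \<omega> \<le> t} \<in> sets (F t)" unfolding eq using 1 2 3 by auto
  qed
qed

lemma Fsig_Tm: "sets (Fsig M F (\<lambda>_. Tm)) = sets M"
proof
  show "sets (Fsig M F (\<lambda>_. Tm)) \<subseteq> sets M" using Fsig_sub[OF Tm_ST] .
  show "sets M \<subseteq> sets (Fsig M F (\<lambda>_. Tm))"
  proof
    fix A assume A: "A \<in> sets M"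
    show "A \<in> sets (Fsig M F (\<lambda>_. Tm))" unfolding sets_Fsig[OF Tm_ST]
    proof (intro CollectI allI)
      fix t show "{\<omega>\<in>A. Tm \<le> t} \<in> sets (F t)"
        using A FgeT[of t] by (cases "Tm \<le> t") auto
    qed
  qed
qed

lemma min_meas:
  assumes th: "\<theta> \<in> STs M F Tm" shows "(\<lambda>\<omega>. min (\<theta> \<omega>) t) \<in> borel_measurable (F t)"
proof (rule borel_measurableI_le)
  fix s
  show "{\<omega>\<in>space (F t). min (\<theta> \<omega>) t \<le> s} \<in> sets (F t)"
  proof (cases "t \<le> s")
    case True
    then have "{\<omega>\<in>space (F t). min (\<theta> \<omega>) t \<le> s} = space (F t)" by auto
    then show ?thesis using sets.top[of "F t"] by simp
  next
    case False
    then have "{\<omega>\<in>space (F t). min (\<theta> \<omega>) t \<le> s} = {\<omega>\<in>space M. \<theta> \<omega> \<le> s}" by auto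
    then show ?thesis using ST_le_pred[OF th, of s] monoF[of s t] False by auto
  qed
qed

lemma eq_set_Fsig:
  assumes th: "\<theta> \<in> STs M F Tm" and th': "\<theta>' \<in> STs M F Tm"
  shows "{\<omega>\<in>space M. \<theta> \<omega> = \<theta>' \<omega>} \<in> sets (Fsig M F \<theta>)"
  unfolding sets_Fsig[OF th]
proof (intro CollectI allI)
  fix t
  have [measurable]: "(\<lambda>\<omega>. min (\<theta> \<omega>) t) \<in> borel_measurable (F t)" "(\<lambda>\<omega>. min (\<theta>' \<omega>) t) \<in> borel_measurable (F t)"
    using min_meas th th' by auto
  have "{\<omega>\<in>space (F t). min (\<theta> \<omega>) t = min (\<theta>' \<omega>) t} \<in> sets (F t)" by measurable
  moreover have "{\<omega>\<in>space (F t). \<theta> \<omega> \<le> t} \<in> sets (F t)" "{\<omega>\<in>space (F t). \<theta>' \<omega> \<le> t} \<in> sets (F t)"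
    using ST_le_pred th th' by auto
  ultimately have "{\<omega>\<in>space (F t). min (\<theta> \<omega>) t = min (\<theta>' \<omega>) t} \<inter> {\<omega>\<in>space (F t). \<theta> \<omega> \<le> t}
      \<inter> {\<omega>\<in>space (F t). \<theta>' \<omega> \<le> t} \<in> sets (F t)" by auto
  moreover have "{\<omega>\<in>space (F t). min (\<theta> \<omega>) t = min (\<theta>' \<omega>) t} \<inter> {\<omega>\<in>space (F t). \<theta> \<omega> \<le> t}
      \<inter> {\<omega>\<in>space (F t). \<theta>' \<omega> \<le> t} = {\<omega>\<in>{\<omega>\<in>space M. \<theta> \<omega> = \<theta>' \<omega>}. \<theta> \<omega> \<le> t}" by (auto simp: min_def)
  ultimately show "{\<omega>\<in>{\<omega>\<in>space M. \<theta> \<omega> = \<theta>' \<omega>}. \<theta> \<omega> \<le> t} \<in> sets (F t)" by metis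
qed

lemma trace_Fsig:
  assumes th: "\<theta> \<in> STs M F Tm" and th': "\<theta>' \<in> STs M F Tm" and C: "C \<in> sets (Fsig M F \<theta>)"
  shows "C \<inter> {\<omega>\<in>space M. \<theta> \<omega> = \<theta>' \<omega>} \<in> sets (Fsig M F \<theta>')"
  unfolding sets_Fsig[OF th']
proof (intro CollectI allI)
  fix t
  have A: "{\<omega>\<in>{\<omega>\<in>space M. \<theta> \<omega> = \<theta>' \<omega>}. \<theta> \<omega> \<le> t} \<in> sets (F t)"
    using eq_set_Fsig[OF th th'] sets_Fsig[OF th] by auto
  have "{\<omega>\<in>C. \<theta> \<omega> \<le> t} \<in> sets (F t)" using C sets_Fsig[OF th] by auto
  with A have "{\<omega>\<in>C. \<theta> \<omega> \<le> t} \<inter> {\<omega>\<in>{\<omega>\<in>space M. \<theta> \<omega> = \<theta>' \<omega>}. \<theta> \<omega> \<le> t} \<in> sets (F t)" by auto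
  moreover have "{\<omega>\<in>C. \<theta> \<omega> \<le> t} \<inter> {\<omega>\<in>{\<omega>\<in>space M. \<theta> \<omega> = \<theta>' \<omega>}. \<theta> \<omega> \<le> t} = {\<omega>\<in>C \<inter> {\<omega>\<in>space M. \<theta> \<omega> = \<theta>' \<omega>}. \<theta>' \<omega> \<le> t}" by auto
  ultimately show "{\<omega>\<in>C \<inter> {\<omega>\<in>space M. \<theta> \<omega> = \<theta>' \<omega>}. \<theta>' \<omega> \<le> t} \<in> sets (F t)" by metis
qed

lemma paste_ST:
  assumes t1: "\<tau>1 \<in> STs M F Tm" and t2: "\<tau>2 \<in> STs M F Tm"
    and A: "A \<in> sets (Fsig M F \<tau>1)" and Ac: "space M - A \<in> sets (Fsig M F \<tau>2)"
  shows "(\<lambda>\<omega>. if \<omega> \<in> A then \<tau>1 \<omega> else \<tau>2 \<omega>) \<in> STs M F Tm"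
proof -
  have Asp: "A \<subseteq> space M" using sets.sets_into_space[OF A] by simp
  have "stopping_time F (\<lambda>\<omega>. if \<omega> \<in> A then \<tau>1 \<omega> else \<tau>2 \<omega>)"
  proof (rule stopping_timeI)
    fix t
    have "{\<omega>\<in>A. \<tau>1 \<omega> \<le> t} \<in> sets (F t)" using A sets_Fsig[OF t1] by auto
    moreover have "{\<omega>\<in>space M - A. \<tau>2 \<omega> \<le> t} \<in> sets (F t)" using Ac sets_Fsig[OF t2] by auto
    ultimately have "{\<omega>\<in>A. \<tau>1 \<omega> \<le> t} \<union> {\<omega>\<in>space M - A. \<tau>2 \<omega> \<le> t} \<in> sets (F t)" by auto
    moreover have "{\<omega>\<in>A. \<tau>1 \<omega> \<le> t} \<union> {\<omega>\<in>space M - A. \<tau>2 \<omega> \<le> t}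
       = {\<omega>\<in>space (F t). (if \<omega> \<in> A then \<tau>1 \<omega> else \<tau>2 \<omega>) \<le> t}" using Asp by auto
    ultimately show "Measurable.pred (F t) (\<lambda>\<omega>. (if \<omega> \<in> A then \<tau>1 \<omega> else \<tau>2 \<omega>) \<le> t)"
      unfolding pred_def by metis
  qed
  then show ?thesis using t1 t2 unfolding STs_def by auto
qed

end

lemma ee_zero[simp]: "enn2ereal 0 = 0"
  by (simp add: zero_ennreal.rep_eq)

lemma ee_plus: "enn2ereal (a + b) = enn2ereal a + enn2ereal b"
  by (simp add: plus_ennreal.rep_eq)

lemma ee_le: "enn2ereal a \<le> enn2ereal b \<longleftrightarrow> a \<le> b"
  by (simp add: less_eq_ennreal.rep_eq)

lemma ee_eq: "enn2ereal a = enn2ereal b \<longleftrightarrow> a = b"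
  by (simp add: enn2ereal_inject)

lemma e2_ee: "enn2ereal (e2ennreal x) = max 0 x"
  by (cases "0 \<le> x") (auto simp: enn2ereal_e2ennreal e2ennreal_neg)

lemma ee_fin: "a < top \<Longrightarrow> \<bar>enn2ereal a\<bar> \<noteq> \<infinity>"
  by (metis abs_ereal_ge0 enn2ereal_eq_top_iff enn2ereal_nonneg less_irrefl)

lemma pos_neg_eq: "enn2ereal (e2ennreal x) - enn2ereal (e2ennreal (- x)) = (x::ereal)"
  unfolding e2_ee by (cases x) (auto simp: max_def)

context sigma_finite_subalgebra
begin

lemma ce_meas[measurable]: "ereal_cond_exp M F X \<in> borel_measurable F"
  unfolding ereal_cond_exp_def by measurable

lemma ce_measM: "ereal_cond_exp M F X \<in> borel_measurable M"
  using measurable_from_subalg[OF subalg ce_meas] .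

lemma ce_mono:
  assumes [measurable]: "X \<in> borel_measurable M" "Y \<in> borel_measurable M" and le: "AE \<omega> in M. X \<omega> \<le> Y \<omega>"
  shows "AE \<omega> in M. ereal_cond_exp M F X \<omega> \<le> ereal_cond_exp M F Y \<omega>"
proof -
  have "AE \<omega> in M. nn_cond_exp M F (\<lambda>x. e2ennreal (X x)) \<omega> \<le> nn_cond_exp M F (\<lambda>x. e2ennreal (Y x)) \<omega>"
    using le by (intro nn_cond_exp_mono) (auto elim!: eventually_mono intro: e2ennreal_mono)
  moreover have "AE \<omega> in M. nn_cond_exp M F (\<lambda>x. e2ennreal (- Y x)) \<omega> \<le> nn_cond_exp M F (\<lambda>x. e2ennreal (- X x)) \<omega>"
    using le by (intro nn_cond_exp_mono) (auto elim!: eventually_mono intro: e2ennreal_mono)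
  ultimately show ?thesis
    unfolding ereal_cond_exp_def
    by eventually_elim (intro ereal_minus_mono, auto simp: ee_le)
qed

lemma ce_F_meas:
  assumes [measurable]: "X \<in> borel_measurable F"
  shows "AE \<omega> in M. ereal_cond_exp M F X \<omega> = X \<omega>"
proof -
  have "AE \<omega> in M. e2ennreal (X \<omega>) = nn_cond_exp M F (\<lambda>x. e2ennreal (X x)) \<omega>"
    by (rule nn_cond_exp_F_meas) measurable
  moreover have "AE \<omega> in M. e2ennreal (- X \<omega>) = nn_cond_exp M F (\<lambda>x. e2ennreal (- X x)) \<omega>"
    by (rule nn_cond_exp_F_meas) measurable
  ultimately show ?thesis unfolding ereal_cond_exp_def
    by eventually_elim (metis pos_neg_eq)
qed

lemma nn_local:
  assumes [measurable]: "f \<in> borel_measurable M" "g \<in> borel_measurable M" and A[measurable]: "A \<in> sets F"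
    and eq: "AE \<omega> in M. \<omega> \<in> A \<longrightarrow> f \<omega> = g \<omega>"
  shows "AE \<omega> in M. \<omega> \<in> A \<longrightarrow> nn_cond_exp M F f \<omega> = nn_cond_exp M F g \<omega>"
proof -
  have AM: "A \<in> sets M" using A subalg by (auto simp: subalgebra_def)
  have ind[measurable]: "(\<lambda>x. indicator A x :: ennreal) \<in> borel_measurable F" by measurable
  have 1: "AE x in M. indicator A x * nn_cond_exp M F f x = nn_cond_exp M F (\<lambda>x. indicator A x * f x) x"
    by (rule nn_cond_exp_prod) auto
  have 2: "AE x in M. indicator A x * nn_cond_exp M F g x = nn_cond_exp M F (\<lambda>x. indicator A x * g x) x"
    by (rule nn_cond_exp_prod) auto
  have 3: "AE x in M. nn_cond_exp M F (\<lambda>x. indicator A x * f x) x = nn_cond_exp M F (\<lambda>x. indicator A x * g x) x"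
    by (rule nn_cond_exp_cong) (use eq AM in \<open>auto elim!: eventually_mono simp: indicator_def\<close>)
  from 1 2 3 show ?thesis by eventually_elim (auto simp: indicator_def)
qed

lemma ce_local:
  assumes [measurable]: "X \<in> borel_measurable M" "Y \<in> borel_measurable M" and A[measurable]: "A \<in> sets F"
    and eq: "AE \<omega> in M. \<omega> \<in> A \<longrightarrow> X \<omega> = Y \<omega>"
  shows "AE \<omega> in M. \<omega> \<in> A \<longrightarrow> ereal_cond_exp M F X \<omega> = ereal_cond_exp M F Y \<omega>"
proof -
  have "AE \<omega> in M. \<omega> \<in> A \<longrightarrow> nn_cond_exp M F (\<lambda>x. e2ennreal (X x)) \<omega> = nn_cond_exp M F (\<lambda>x. e2ennreal (Y x)) \<omega>"
    by (rule nn_local) (use eq in \<open>auto elim!: eventually_mono\<close>)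
  moreover have "AE \<omega> in M. \<omega> \<in> A \<longrightarrow> nn_cond_exp M F (\<lambda>x. e2ennreal (- X x)) \<omega> = nn_cond_exp M F (\<lambda>x. e2ennreal (- Y x)) \<omega>"
    by (rule nn_local) (use eq in \<open>auto elim!: eventually_mono\<close>)
  ultimately show ?thesis unfolding ereal_cond_exp_def by eventually_elim auto
qed

lemma nn_zero: "AE \<omega> in M. nn_cond_exp M F (\<lambda>_. 0) \<omega> = 0"
  using nn_cond_exp_F_meas[of "\<lambda>_. 0"] by (auto elim!: eventually_mono)

lemma nn_ae_zero:
  assumes [measurable]: "f \<in> borel_measurable M" and z: "AE \<omega> in M. f \<omega> = 0"
  shows "AE \<omega> in M. nn_cond_exp M F f \<omega> = 0"
proof -
  have "AE \<omega> in M. nn_cond_exp M F f \<omega> = nn_cond_exp M F (\<lambda>_. 0) \<omega>"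
    by (rule nn_cond_exp_cong) (use z in auto)
  with nn_zero show ?thesis by eventually_elim simp
qed

lemma ce_nonneg:
  assumes [measurable]: "X \<in> borel_measurable M" and nn: "AE \<omega> in M. 0 \<le> X \<omega>"
  shows "AE \<omega> in M. ereal_cond_exp M F X \<omega> = enn2ereal (nn_cond_exp M F (\<lambda>x. e2ennreal (X x)) \<omega>)"
proof -
  have "AE \<omega> in M. nn_cond_exp M F (\<lambda>x. e2ennreal (- X x)) \<omega> = 0"
    by (rule nn_ae_zero) (use nn in \<open>auto elim!: eventually_mono intro: e2ennreal_neg\<close>)
  then show ?thesis unfolding ereal_cond_exp_def by eventually_elim simp
qed

lemma ce_zero: "AE \<omega> in M. ereal_cond_exp M F (\<lambda>_. 0) \<omega> = 0"
  using ce_F_meas[of "\<lambda>_. 0"] by simp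

lemma nn_SUP:
  fixes f :: "nat \<Rightarrow> 'a \<Rightarrow> ennreal"
  assumes [measurable]: "\<And>k. f k \<in> borel_measurable M" and inc: "AE \<omega> in M. incseq (\<lambda>k. f k \<omega>)"
  shows "AE \<omega> in M. nn_cond_exp M F (\<lambda>\<omega>. SUP k. f k \<omega>) \<omega> = (SUP k. nn_cond_exp M F (f k) \<omega>)"
proof -
  have incn: "\<And>k. AE \<omega> in M. nn_cond_exp M F (f k) \<omega> \<le> nn_cond_exp M F (f (Suc k)) \<omega>"
    by (rule nn_cond_exp_mono) (use inc in \<open>auto elim!: eventually_mono simp: incseq_Suc_iff\<close>)
  have "AE \<omega> in M. (SUP k. nn_cond_exp M F (f k) \<omega>) = nn_cond_exp M F (\<lambda>\<omega>. SUP k. f k \<omega>) \<omega>"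
  proof (rule nn_cond_exp_charact)
    fix A assume A[measurable]: "A \<in> sets F"
    then have AM[measurable]: "A \<in> sets M" using subalg by (auto simp: subalgebra_def)
    have "(\<integral>\<^sup>+ x \<in> A. (SUP k. f k x) \<partial>M) = (\<integral>\<^sup>+ x. (SUP k. f k x * indicator A x) \<partial>M)"
      by (simp add: SUP_mult_right_ennreal)
    also have "\<dots> = (SUP k. \<integral>\<^sup>+ x. f k x * indicator A x \<partial>M)"
      by (rule nn_integral_monotone_convergence_SUP_AE)
         (use inc in \<open>auto elim!: eventually_mono simp: incseq_Suc_iff intro: mult_right_mono\<close>)
    also have "\<dots> = (SUP k. \<integral>\<^sup>+ x. nn_cond_exp M F (f k) x * indicator A x \<partial>M)"
    proof (rule SUP_cong[OF refl])
      fix k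
      have "(\<integral>\<^sup>+ x. indicator A x * f k x \<partial>M) = (\<integral>\<^sup>+ x. indicator A x * nn_cond_exp M F (f k) x \<partial>M)"
        by (rule nn_cond_exp_intg[symmetric]) auto
      then show "(\<integral>\<^sup>+ x. f k x * indicator A x \<partial>M) = (\<integral>\<^sup>+ x. nn_cond_exp M F (f k) x * indicator A x \<partial>M)"
        by (simp add: mult.commute)
    qed
    also have "\<dots> = (\<integral>\<^sup>+ x. (SUP k. nn_cond_exp M F (f k) x * indicator A x) \<partial>M)"
    proof (rule nn_integral_monotone_convergence_SUP_AE[symmetric])
      fix k show "AE x in M. nn_cond_exp M F (f k) x * indicator A x \<le> nn_cond_exp M F (f (Suc k)) x * indicator A x"
        using incn[of k] by eventually_elim (auto intro: mult_right_mono)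
    qed auto
    also have "\<dots> = (\<integral>\<^sup>+ x \<in> A. (SUP k. nn_cond_exp M F (f k) x) \<partial>M)"
      by (simp add: SUP_mult_right_ennreal)
    finally show "(\<integral>\<^sup>+ x \<in> A. (SUP k. f k x) \<partial>M) = (\<integral>\<^sup>+ x \<in> A. (SUP k. nn_cond_exp M F (f k) x) \<partial>M)" .
  qed auto
  then show ?thesis by (auto elim!: eventually_mono)
qed

lemma nn_finite:
  assumes fm: "finite_measure M" and [measurable]: "f \<in> borel_measurable M" and fin: "AE \<omega> in M. nn_cond_exp M F f \<omega> < top"
  shows "AE \<omega> in M. f \<omega> < top"
proof -
  interpret fmM: finite_measure M by (rule fm)
  have sF: "space F = space M" using subalg by (auto simp: subalgebra_def)
  have k: "AE \<omega> in M. nn_cond_exp M F f \<omega> \<le> of_nat k \<longrightarrow> f \<omega> < top" for k :: nat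
  proof -
    define B where "B = {x\<in>space M. nn_cond_exp M F f x \<le> of_nat k}"
    have "{x\<in>space F. nn_cond_exp M F f x \<le> of_nat k} \<in> sets F" by measurable
    then have B[measurable]: "B \<in> sets F" unfolding B_def sF .
    have BM[measurable]: "B \<in> sets M" using B subalg by (auto simp: subalgebra_def)
    have "(\<integral>\<^sup>+ x. indicator B x * f x \<partial>M) = (\<integral>\<^sup>+ x. indicator B x * nn_cond_exp M F f x \<partial>M)"
      by (rule nn_cond_exp_intg[symmetric]) auto
    also have "\<dots> \<le> (\<integral>\<^sup>+ x. of_nat k \<partial>M)"
      by (rule nn_integral_mono) (auto simp: B_def indicator_def)
    also have "\<dots> < top" using fmM.emeasure_finite[of "space M"] by (simp add: ennreal_mult_eq_top_iff of_nat_less_top less_top[symmetric])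
    finally have lt: "(\<integral>\<^sup>+ x. indicator B x * f x \<partial>M) < top" .
    have "AE x in M. indicator B x * f x \<noteq> \<infinity>"
    proof (rule nn_integral_PInf_AE)
      show "(\<lambda>x. indicator B x * f x) \<in> borel_measurable M" by measurable
      show "(\<integral>\<^sup>+ x. indicator B x * f x \<partial>M) \<noteq> \<infinity>" using lt by (simp add: infinity_ennreal_def)
    qed
    with AE_space show ?thesis by eventually_elim (auto simp: B_def indicator_def less_top infinity_ennreal_def)
  qed
  then have "AE \<omega> in M. \<forall>k::nat. nn_cond_exp M F f \<omega> \<le> of_nat k \<longrightarrow> f \<omega> < top"
    by (subst AE_all_countable) blast
  with fin show ?thesis
  proof eventually_elim
    case (elim \<omega>)
    then obtain n :: nat where "nn_cond_exp M F f \<omega> < of_nat n" using ennreal_Ex_less_of_nat by blast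
    with elim show ?case by (meson less_imp_le)
  qed
qed

end

lemma ereal_shift_aux:
  fixes a b c g :: ereal
  assumes "a + g = b + c" "\<bar>g\<bar> \<noteq> \<infinity>" "\<bar>c\<bar> \<noteq> \<infinity>"
  shows "a - c = b - g"
  using assms by (cases a; cases b; cases c; cases g) auto

lemma pointwise_shift:
  fixes x :: ereal and G :: ennreal
  assumes "- enn2ereal G \<le> x" "G < top"
  shows "e2ennreal x + G = e2ennreal (x + enn2ereal G) + e2ennreal (- x)"
proof -
  obtain g where g: "G = ennreal g" "0 \<le> g"
    using assms(2) by (cases G rule: ennreal_cases) auto
  then have g2: "enn2ereal G = ereal g" by simp
  have "enn2ereal (e2ennreal x + G) = enn2ereal (e2ennreal (x + enn2ereal G) + e2ennreal (- x))"
    unfolding ee_plus e2_ee g2 using assms(1) g g2 by (cases x) (auto simp: max_def)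
  then show ?thesis by (simp add: ee_eq)
qed

context sigma_finite_subalgebra
begin

lemma ce_shift:
  assumes fm: "finite_measure M"
    and [measurable]: "X \<in> borel_measurable M" "G \<in> borel_measurable M"
    and Gint: "(\<integral>\<^sup>+\<omega>. G \<omega> \<partial>M) < top"
    and lb: "AE \<omega> in M. - enn2ereal (G \<omega>) \<le> X \<omega>"
  shows "AE \<omega> in M. nn_cond_exp M F G \<omega> < top \<and>
     ereal_cond_exp M F X \<omega> = enn2ereal (nn_cond_exp M F (\<lambda>\<omega>. e2ennreal (X \<omega> + enn2ereal (G \<omega>))) \<omega>)
       - enn2ereal (nn_cond_exp M F G \<omega>)"
proof -
  have Gfin: "AE \<omega> in M. G \<omega> < top"
    using nn_integral_PInf_AE[of G M] Gint by (auto simp: infinity_ennreal_def less_top)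
  have "(\<integral>\<^sup>+\<omega>. 1 * nn_cond_exp M F G \<omega> \<partial>M) = (\<integral>\<^sup>+\<omega>. 1 * G \<omega> \<partial>M)"
    by (rule nn_cond_exp_intg) auto
  then have "(\<integral>\<^sup>+\<omega>. nn_cond_exp M F G \<omega> \<partial>M) < top" using Gint by simp
  then have nGfin: "AE \<omega> in M. nn_cond_exp M F G \<omega> < top"
    using nn_integral_PInf_AE[of "nn_cond_exp M F G" M] by (auto simp: infinity_ennreal_def less_top)
  have pw: "AE \<omega> in M. e2ennreal (X \<omega>) + G \<omega> = e2ennreal (X \<omega> + enn2ereal (G \<omega>)) + e2ennreal (- X \<omega>)"
    using lb Gfin by eventually_elim (rule pointwise_shift)
  have negle: "AE \<omega> in M. e2ennreal (- X \<omega>) \<le> G \<omega>"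
    using lb
  proof eventually_elim
    case (elim \<omega>)
    then have "- X \<omega> \<le> enn2ereal (G \<omega>)" by (simp add: ereal_uminus_le_reorder)
    then have "e2ennreal (- X \<omega>) \<le> e2ennreal (enn2ereal (G \<omega>))" by (rule e2ennreal_mono)
    then show ?case by simp
  qed
  have 1: "AE \<omega> in M. nn_cond_exp M F (\<lambda>x. e2ennreal (X x)) \<omega> + nn_cond_exp M F G \<omega>
      = nn_cond_exp M F (\<lambda>x. e2ennreal (X x) + G x) \<omega>"
    by (rule nn_cond_exp_sum) auto
  have 2: "AE \<omega> in M. nn_cond_exp M F (\<lambda>x. e2ennreal (X x) + G x) \<omega>
      = nn_cond_exp M F (\<lambda>x. e2ennreal (X x + enn2ereal (G x)) + e2ennreal (- X x)) \<omega>"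
    by (rule nn_cond_exp_cong) (use pw in auto)
  have 3: "AE \<omega> in M. nn_cond_exp M F (\<lambda>x. e2ennreal (X x + enn2ereal (G x))) \<omega> + nn_cond_exp M F (\<lambda>x. e2ennreal (- X x)) \<omega>
      = nn_cond_exp M F (\<lambda>x. e2ennreal (X x + enn2ereal (G x)) + e2ennreal (- X x)) \<omega>"
    by (rule nn_cond_exp_sum) auto
  have 4: "AE \<omega> in M. nn_cond_exp M F (\<lambda>x. e2ennreal (- X x)) \<omega> \<le> nn_cond_exp M F G \<omega>"
    by (rule nn_cond_exp_mono) (use negle in auto)
  from 1 2 3 4 nGfin show ?thesis unfolding ereal_cond_exp_def
  proof eventually_elim
    case (elim \<omega>)
    let ?a = "enn2ereal (nn_cond_exp M F (\<lambda>x. e2ennreal (X x)) \<omega>)"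
    let ?b = "enn2ereal (nn_cond_exp M F (\<lambda>x. e2ennreal (X x + enn2ereal (G x))) \<omega>)"
    let ?c = "enn2ereal (nn_cond_exp M F (\<lambda>x. e2ennreal (- X x)) \<omega>)"
    let ?g = "enn2ereal (nn_cond_exp M F G \<omega>)"
    have "nn_cond_exp M F (\<lambda>x. e2ennreal (X x)) \<omega> + nn_cond_exp M F G \<omega>
      = nn_cond_exp M F (\<lambda>x. e2ennreal (X x + enn2ereal (G x))) \<omega> + nn_cond_exp M F (\<lambda>x. e2ennreal (- X x)) \<omega>"
      using elim(1-3) by simp
    then have "?a + ?g = ?b + ?c" unfolding ee_plus[symmetric] by simp
    moreover have "\<bar>?g\<bar> \<noteq> \<infinity>" using elim(5) by (rule ee_fin)
    moreover have "\<bar>?c\<bar> \<noteq> \<infinity>" using elim(4,5) by (intro ee_fin) (rule le_less_trans)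
    ultimately have "?a - ?c = ?b - ?g" by (rule ereal_shift_aux)
    then show ?case using elim(5) by simp
  qed
qed

end

context stdset
begin

interpretation prob_space M by (rule prob)

lemma eq_set_sym: "{\<omega>\<in>space M. \<theta> \<omega> = \<theta>' \<omega>} = {\<omega>\<in>space M. \<theta>' \<omega> = \<theta> \<omega>}" by auto

lemma trace_meas:
  fixes h :: "'a \<Rightarrow> 'b::topological_space"
  assumes th: "\<theta> \<in> STs M F Tm" and th': "\<theta>' \<in> STs M F Tm" and h: "h \<in> borel_measurable (Fsig M F \<theta>)"
  shows "(\<lambda>\<omega>. if \<omega> \<in> {\<omega>\<in>space M. \<theta> \<omega> = \<theta>' \<omega>} then h \<omega> else c) \<in> borel_measurable (Fsig M F \<theta>')"
proof (rule measurableI)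
  fix B :: "'b set" assume B: "B \<in> sets borel"
  define A where "A = {\<omega>\<in>space M. \<theta> \<omega> = \<theta>' \<omega>}"
  have A': "A \<in> sets (Fsig M F \<theta>')" unfolding A_def eq_set_sym[of \<theta>] by (rule eq_set_Fsig[OF th' th])
  have hB: "h -` B \<inter> space M \<in> sets (Fsig M F \<theta>)" using measurable_sets[OF h B] by simp
  have 1: "(h -` B \<inter> space M) \<inter> A \<in> sets (Fsig M F \<theta>')" unfolding A_def by (rule trace_Fsig[OF th th' hB])
  have 2: "space M - A \<in> sets (Fsig M F \<theta>')" using A' sets.compl_sets[of A "Fsig M F \<theta>'"] by simp
  have eq: "(\<lambda>\<omega>. if \<omega> \<in> A then h \<omega> else c) -` B \<inter> space (Fsig M F \<theta>')
     = ((h -` B \<inter> space M) \<inter> A) \<union> (if c \<in> B then space M - A else {})"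
    unfolding A_def by (auto split: if_splits)
  show "(\<lambda>\<omega>. if \<omega> \<in> {\<omega>\<in>space M. \<theta> \<omega> = \<theta>' \<omega>} then h \<omega> else c) -` B \<inter> space (Fsig M F \<theta>') \<in> sets (Fsig M F \<theta>')"
    unfolding A_def[symmetric] eq using 1 2 by auto
qed auto

lemma nn_switch:
  assumes th: "\<theta> \<in> STs M F Tm" and th': "\<theta>' \<in> STs M F Tm" and f[measurable]: "f \<in> borel_measurable M"
  shows "AE \<omega> in M. \<theta> \<omega> = \<theta>' \<omega> \<longrightarrow> nn_cond_exp M (Fsig M F \<theta>) f \<omega> = nn_cond_exp M (Fsig M F \<theta>') f \<omega>"
proof -
  interpret S: sigma_finite_subalgebra M "Fsig M F \<theta>" by (rule sfs[OF th])
  interpret S': sigma_finite_subalgebra M "Fsig M F \<theta>'" by (rule sfs[OF th'])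
  define A where "A = {\<omega>\<in>space M. \<theta> \<omega> = \<theta>' \<omega>}"
  have A: "A \<in> sets (Fsig M F \<theta>)" unfolding A_def by (rule eq_set_Fsig[OF th th'])
  have A': "A \<in> sets (Fsig M F \<theta>')" unfolding A_def eq_set_sym[of \<theta>] by (rule eq_set_Fsig[OF th' th])
  have AM[measurable]: "A \<in> sets M" using A Fsig_sub[OF th] by auto
  define W where "W = (\<lambda>\<omega>. if \<omega> \<in> A then nn_cond_exp M (Fsig M F \<theta>) f \<omega> else 0)"
  have Wm: "W \<in> borel_measurable (Fsig M F \<theta>')" unfolding W_def A_def
    by (rule trace_meas[OF th th']) simp
  have WmM[measurable]: "W \<in> borel_measurable M" using Fsig_measM[OF th' Wm] .
  have W_eq: "W = (\<lambda>\<omega>. indicator A \<omega> * nn_cond_exp M (Fsig M F \<theta>) f \<omega>)"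
    unfolding W_def by (auto simp: indicator_def)
  have "AE \<omega> in M. W \<omega> = nn_cond_exp M (Fsig M F \<theta>') (\<lambda>\<omega>. indicator A \<omega> * f \<omega>) \<omega>"
  proof (rule S'.nn_cond_exp_charact)
    fix B assume B: "B \<in> sets (Fsig M F \<theta>')"
    have BA: "B \<inter> A \<in> sets (Fsig M F \<theta>)" unfolding A_def eq_set_sym[of \<theta>]
      by (rule trace_Fsig[OF th' th B])
    have BAm[measurable]: "B \<inter> A \<in> sets M" using BA Fsig_sub[OF th] by auto
    have BAm'[measurable]: "(\<lambda>x. indicator (B \<inter> A) x :: ennreal) \<in> borel_measurable (Fsig M F \<theta>)"
      using BA by measurable
    have "(\<integral>\<^sup>+ x \<in> B. indicator A x * f x \<partial>M) = (\<integral>\<^sup>+ x. indicator (B \<inter> A) x * f x \<partial>M)"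
      by (rule nn_integral_cong) (auto simp: indicator_def)
    also have "\<dots> = (\<integral>\<^sup>+ x. indicator (B \<inter> A) x * nn_cond_exp M (Fsig M F \<theta>) f x \<partial>M)"
      by (rule S.nn_cond_exp_intg[symmetric]) auto
    also have "\<dots> = (\<integral>\<^sup>+ x \<in> B. W x \<partial>M)"
      unfolding W_eq by (rule nn_integral_cong) (auto simp: indicator_def)
    finally show "(\<integral>\<^sup>+ x \<in> B. indicator A x * f x \<partial>M) = (\<integral>\<^sup>+ x \<in> B. W x \<partial>M)" .
  qed (use Wm in auto)
  moreover have "AE \<omega> in M. indicator A \<omega> * nn_cond_exp M (Fsig M F \<theta>') f \<omega> = nn_cond_exp M (Fsig M F \<theta>') (\<lambda>\<omega>. indicator A \<omega> * f \<omega>) \<omega>"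
    by (rule S'.nn_cond_exp_prod) (use A' in measurable)
  ultimately show ?thesis using AE_space
    by eventually_elim (auto simp: W_def A_def indicator_def)
qed

lemma ce_switch:
  assumes th: "\<theta> \<in> STs M F Tm" and th': "\<theta>' \<in> STs M F Tm" and [measurable]: "X \<in> borel_measurable M"
  shows "AE \<omega> in M. \<theta> \<omega> = \<theta>' \<omega> \<longrightarrow> ereal_cond_exp M (Fsig M F \<theta>) X \<omega> = ereal_cond_exp M (Fsig M F \<theta>') X \<omega>"
proof -
  have "AE \<omega> in M. \<theta> \<omega> = \<theta>' \<omega> \<longrightarrow> nn_cond_exp M (Fsig M F \<theta>) (\<lambda>x. e2ennreal (X x)) \<omega> = nn_cond_exp M (Fsig M F \<theta>') (\<lambda>x. e2ennreal (X x)) \<omega>"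
    by (rule nn_switch[OF th th']) measurable
  moreover have "AE \<omega> in M. \<theta> \<omega> = \<theta>' \<omega> \<longrightarrow> nn_cond_exp M (Fsig M F \<theta>) (\<lambda>x. e2ennreal (- X x)) \<omega> = nn_cond_exp M (Fsig M F \<theta>') (\<lambda>x. e2ennreal (- X x)) \<omega>"
    by (rule nn_switch[OF th th']) measurable
  ultimately show ?thesis unfolding ereal_cond_exp_def by eventually_elim auto
qed

end

lemma ee_SUP: "enn2ereal (SUP k::nat. f k) = (SUP k. enn2ereal (f k))"
proof -
  have "enn2ereal (SUP k::nat. f k) = sup 0 (Sup (enn2ereal ` range f))"
    by (simp add: Sup_ennreal.rep_eq)
  also have "\<dots> = (SUP k. enn2ereal (f k))"
    using SUP_upper[of 0 UNIV "\<lambda>k. enn2ereal (f k)"] enn2ereal_nonneg[of "f 0"]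
    by (simp add: image_comp max_def) (metis enn2ereal_nonneg order.trans)
  finally show ?thesis .
qed

definition Vf :: "'a measure \<Rightarrow> (real \<Rightarrow> 'a measure) \<Rightarrow> real \<Rightarrow> 'a family \<Rightarrow> 'a family" where
  "Vf M F Tm X = (\<lambda>\<theta>. esssup_fam M (Fsig M F \<theta>)
      {ereal_cond_exp M (Fsig M F \<theta>) (X \<tau>) | \<tau>. \<tau> \<in> STs_from M F Tm \<theta>})"

context stdset
begin

interpretation prob_space M by (rule prob)

lemma STs_fromD: "\<tau> \<in> STs_from M F Tm \<theta> \<Longrightarrow> \<tau> \<in> STs M F Tm \<and> (AE \<omega> in M. \<theta> \<omega> \<le> \<tau> \<omega>)"
  unfolding STs_from_def by auto

lemma STs_fromI: "\<tau> \<in> STs M F Tm \<Longrightarrow> (AE \<omega> in M. \<theta> \<omega> \<le> \<tau> \<omega>) \<Longrightarrow> \<tau> \<in> STs_from M F Tm \<theta>"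
  unfolding STs_from_def by auto

lemma STs_from_refl: "\<theta> \<in> STs M F Tm \<Longrightarrow> \<theta> \<in> STs_from M F Tm \<theta>"
  by (rule STs_fromI) auto

lemma STs_from_Tm: "\<theta> \<in> STs M F Tm \<Longrightarrow> (\<lambda>_. Tm) \<in> STs_from M F Tm \<theta>"
  by (rule STs_fromI[OF Tm_ST]) (use ST_bnd in \<open>auto intro!: AE_I2\<close>)

lemma adm_measM: "admissible M F Tm X \<Longrightarrow> \<tau> \<in> STs M F Tm \<Longrightarrow> X \<tau> \<in> borel_measurable M"
  unfolding admissible_def using Fsig_measM by blast

lemma adm_meas: "admissible M F Tm X \<Longrightarrow> \<tau> \<in> STs M F Tm \<Longrightarrow> X \<tau> \<in> borel_measurable (Fsig M F \<tau>)"
  unfolding admissible_def by blast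

lemma adm_loc: "admissible M F Tm X \<Longrightarrow> \<tau> \<in> STs M F Tm \<Longrightarrow> \<tau>' \<in> STs M F Tm \<Longrightarrow>
   AE \<omega> in M. \<tau> \<omega> = \<tau>' \<omega> \<longrightarrow> X \<tau> \<omega> = X \<tau>' \<omega>"
  unfolding admissible_def by blast

lemma Vf_meas: "\<theta> \<in> STs M F Tm \<Longrightarrow> Vf M F Tm X \<theta> \<in> borel_measurable (Fsig M F \<theta>)"
  unfolding Vf_def
  by (rule ess.esssup_meas[OF essF]) (auto intro: sigma_finite_subalgebra.ce_meas[OF sfs])

lemma Vf_upper: "\<theta> \<in> STs M F Tm \<Longrightarrow> \<tau> \<in> STs_from M F Tm \<theta> \<Longrightarrow>
    AE \<omega> in M. ereal_cond_exp M (Fsig M F \<theta>) (X \<tau>) \<omega> \<le> Vf M F Tm X \<theta> \<omega>"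
  unfolding Vf_def
  by (rule ess.esssup_upper[OF essF]) (auto intro: sigma_finite_subalgebra.ce_meas[OF sfs])

lemma Vf_least: "\<theta> \<in> STs M F Tm \<Longrightarrow> Z \<in> borel_measurable (Fsig M F \<theta>) \<Longrightarrow>
    (\<And>\<tau>. \<tau> \<in> STs_from M F Tm \<theta> \<Longrightarrow> AE \<omega> in M. ereal_cond_exp M (Fsig M F \<theta>) (X \<tau>) \<omega> \<le> Z \<omega>) \<Longrightarrow>
    AE \<omega> in M. Vf M F Tm X \<theta> \<omega> \<le> Z \<omega>"
  unfolding Vf_def
  by (rule ess.esssup_least[OF essF]) (auto intro: sigma_finite_subalgebra.ce_meas[OF sfs])

lemma Vf_mono:
  assumes th: "\<theta> \<in> STs M F Tm"
    and m: "\<And>\<tau>. \<tau> \<in> STs M F Tm \<Longrightarrow> X \<tau> \<in> borel_measurable M" "\<And>\<tau>. \<tau> \<in> STs M F Tm \<Longrightarrow> Y \<tau> \<in> borel_measurable M"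
    and le: "\<And>\<tau>. \<tau> \<in> STs M F Tm \<Longrightarrow> AE \<omega> in M. X \<tau> \<omega> \<le> Y \<tau> \<omega>"
  shows "AE \<omega> in M. Vf M F Tm X \<theta> \<omega> \<le> Vf M F Tm Y \<theta> \<omega>"
proof (rule Vf_least[OF th Vf_meas[OF th]])
  fix \<tau> assume t: "\<tau> \<in> STs_from M F Tm \<theta>"
  then have t': "\<tau> \<in> STs M F Tm" by (simp add: STs_fromD)
  have "AE \<omega> in M. ereal_cond_exp M (Fsig M F \<theta>) (X \<tau>) \<omega> \<le> ereal_cond_exp M (Fsig M F \<theta>) (Y \<tau>) \<omega>"
    by (rule sigma_finite_subalgebra.ce_mono[OF sfs[OF th] m(1)[OF t'] m(2)[OF t'] le[OF t']])
  with Vf_upper[OF th t, of Y] show "AE \<omega> in M. ereal_cond_exp M (Fsig M F \<theta>) (X \<tau>) \<omega> \<le> Vf M F Tm Y \<theta> \<omega>"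
    by eventually_elim (rule order_trans)
qed

end

locale snell = stdset +
  fixes X :: "'a family" and G :: "'a \<Rightarrow> ennreal"
  assumes admX: "admissible M F Tm X"
    and Gm[measurable]: "G \<in> borel_measurable M" and Gint: "(\<integral>\<^sup>+\<omega>. G \<omega> \<partial>M) < top"
    and Xlb: "\<And>\<tau>. \<tau> \<in> STs M F Tm \<Longrightarrow> AE \<omega> in M. - enn2ereal (G \<omega>) \<le> X \<tau> \<omega>"
    and XT: "AE \<omega> in M. 0 \<le> X (\<lambda>_. Tm) \<omega>"
begin

interpretation prob_space M by (rule prob)

abbreviation "V \<equiv> Vf M F Tm X"
abbreviation "ce \<theta> \<equiv> ereal_cond_exp M (Fsig M F \<theta>)"

lemma Xm: "\<tau> \<in> STs M F Tm \<Longrightarrow> X \<tau> \<in> borel_measurable M" using adm_measM[OF admX] .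

lemma V_ge: assumes th: "\<theta> \<in> STs M F Tm" shows "AE \<omega> in M. X \<theta> \<omega> \<le> V \<theta> \<omega>"
proof -
  have "AE \<omega> in M. ce \<theta> (X \<theta>) \<omega> = X \<theta> \<omega>"
    by (rule sigma_finite_subalgebra.ce_F_meas[OF sfs[OF th] adm_meas[OF admX th]])
  with Vf_upper[OF th STs_from_refl[OF th], of X] show ?thesis by eventually_elim simp
qed

lemma V_nonneg: assumes th: "\<theta> \<in> STs M F Tm" shows "AE \<omega> in M. 0 \<le> V \<theta> \<omega>"
proof -
  interpret S: sigma_finite_subalgebra M "Fsig M F \<theta>" by (rule sfs[OF th])
  have "AE \<omega> in M. ce \<theta> (\<lambda>_. 0) \<omega> \<le> ce \<theta> (X (\<lambda>_. Tm)) \<omega>"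
    by (rule S.ce_mono) (use XT Xm[OF Tm_ST] in auto)
  with S.ce_zero Vf_upper[OF th STs_from_Tm[OF th], of X] show ?thesis
    by eventually_elim simp
qed

lemma V_directed:
  assumes th: "\<theta> \<in> STs M F Tm" and t1: "\<tau>1 \<in> STs_from M F Tm \<theta>" and t2: "\<tau>2 \<in> STs_from M F Tm \<theta>"
  shows "\<exists>\<tau>\<in>STs_from M F Tm \<theta>. AE \<omega> in M. max (ce \<theta> (X \<tau>1) \<omega>) (ce \<theta> (X \<tau>2) \<omega>) \<le> ce \<theta> (X \<tau>) \<omega>"
proof -
  interpret S: sigma_finite_subalgebra M "Fsig M F \<theta>" by (rule sfs[OF th])
  have t1': "\<tau>1 \<in> STs M F Tm" and t1a: "AE \<omega> in M. \<theta> \<omega> \<le> \<tau>1 \<omega>" using STs_fromD[OF t1] by auto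
  have t2': "\<tau>2 \<in> STs M F Tm" and t2a: "AE \<omega> in M. \<theta> \<omega> \<le> \<tau>2 \<omega>" using STs_fromD[OF t2] by auto
  define A where "A = {\<omega>\<in>space M. ce \<theta> (X \<tau>2) \<omega> \<le> ce \<theta> (X \<tau>1) \<omega>}"
  have "{\<omega>\<in>space (Fsig M F \<theta>). ce \<theta> (X \<tau>2) \<omega> \<le> ce \<theta> (X \<tau>1) \<omega>} \<in> sets (Fsig M F \<theta>)" by measurable
  then have A: "A \<in> sets (Fsig M F \<theta>)" unfolding A_def by simp
  have Ac: "space M - A \<in> sets (Fsig M F \<theta>)" using sets.compl_sets[OF A] by simp
  have A1: "A \<in> sets (Fsig M F \<tau>1)" using Fsig_mono[OF t1' th t1a] A by auto
  have A2: "space M - A \<in> sets (Fsig M F \<tau>2)" using Fsig_mono[OF t2' th t2a] Ac by auto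
  define \<tau> where "\<tau> = (\<lambda>\<omega>. if \<omega> \<in> A then \<tau>1 \<omega> else \<tau>2 \<omega>)"
  have tS: "\<tau> \<in> STs M F Tm" unfolding \<tau>_def by (rule paste_ST[OF t1' t2' A1 A2])
  have "AE \<omega> in M. \<theta> \<omega> \<le> \<tau> \<omega>" using t1a t2a by eventually_elim (auto simp: \<tau>_def)
  then have tF: "\<tau> \<in> STs_from M F Tm \<theta>" using tS by (rule STs_fromI[rotated])
  have e1: "AE \<omega> in M. \<omega> \<in> A \<longrightarrow> X \<tau> \<omega> = X \<tau>1 \<omega>"
    using adm_loc[OF admX tS t1'] by eventually_elim (auto simp: \<tau>_def)
  have e2: "AE \<omega> in M. \<omega> \<in> space M - A \<longrightarrow> X \<tau> \<omega> = X \<tau>2 \<omega>"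
    using adm_loc[OF admX tS t2'] by eventually_elim (auto simp: \<tau>_def)
  have c1: "AE \<omega> in M. \<omega> \<in> A \<longrightarrow> ce \<theta> (X \<tau>) \<omega> = ce \<theta> (X \<tau>1) \<omega>"
    by (rule S.ce_local[OF Xm[OF tS] Xm[OF t1'] A e1])
  have c2: "AE \<omega> in M. \<omega> \<in> space M - A \<longrightarrow> ce \<theta> (X \<tau>) \<omega> = ce \<theta> (X \<tau>2) \<omega>"
    by (rule S.ce_local[OF Xm[OF tS] Xm[OF t2'] Ac e2])
  have "AE \<omega> in M. max (ce \<theta> (X \<tau>1) \<omega>) (ce \<theta> (X \<tau>2) \<omega>) \<le> ce \<theta> (X \<tau>) \<omega>"
    using c1 c2 AE_space by eventually_elim (auto simp: A_def max_def)
  with tF show ?thesis by blast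
qed

lemma V_seq:
  assumes th: "\<theta> \<in> STs M F Tm"
  shows "\<exists>\<tau>s. (\<forall>k::nat. \<tau>s k \<in> STs_from M F Tm \<theta>) \<and> (AE \<omega> in M. incseq (\<lambda>k. ce \<theta> (X (\<tau>s k)) \<omega>))
      \<and> (AE \<omega> in M. V \<theta> \<omega> = (SUP k. ce \<theta> (X (\<tau>s k)) \<omega>))"
proof -
  interpret S: sigma_finite_subalgebra M "Fsig M F \<theta>" by (rule sfs[OF th])
  interpret E: ess M "Fsig M F \<theta>" by (rule essF[OF th])
  let ?S = "{ce \<theta> (X \<tau>) | \<tau>. \<tau> \<in> STs_from M F Tm \<theta>}"
  have "\<exists>f::nat \<Rightarrow> 'a \<Rightarrow> ereal. (\<forall>k. f k \<in> ?S) \<and> (AE \<omega> in M. incseq (\<lambda>k. f k \<omega>))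
          \<and> (AE \<omega> in M. esssup_fam M (Fsig M F \<theta>) ?S \<omega> = (SUP k. f k \<omega>))"
  proof (rule E.esssup_directed_seq)
    show "?S \<noteq> {}" using STs_from_refl[OF th] by blast
    fix Y Z assume "Y \<in> ?S" "Z \<in> ?S"
    then obtain \<tau>1 \<tau>2 where "\<tau>1 \<in> STs_from M F Tm \<theta>" "Y = ce \<theta> (X \<tau>1)" "\<tau>2 \<in> STs_from M F Tm \<theta>" "Z = ce \<theta> (X \<tau>2)"
      by blast
    then show "\<exists>W\<in>?S. AE \<omega> in M. max (Y \<omega>) (Z \<omega>) \<le> W \<omega>" using V_directed[OF th] by blast
  qed auto
  then obtain f :: "nat \<Rightarrow> 'a \<Rightarrow> ereal" where f: "\<forall>k. f k \<in> ?S" "AE \<omega> in M. incseq (\<lambda>k. f k \<omega>)"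
    "AE \<omega> in M. esssup_fam M (Fsig M F \<theta>) ?S \<omega> = (SUP k. f k \<omega>)" by blast
  have "\<forall>k. \<exists>\<tau>. \<tau> \<in> STs_from M F Tm \<theta> \<and> f k = ce \<theta> (X \<tau>)" using f(1) by blast
  then obtain \<tau>s where ts: "\<And>k. \<tau>s k \<in> STs_from M F Tm \<theta>" "\<And>k. f k = ce \<theta> (X (\<tau>s k))" by metis
  have "(\<forall>k::nat. \<tau>s k \<in> STs_from M F Tm \<theta>) \<and> (AE \<omega> in M. incseq (\<lambda>k. ce \<theta> (X (\<tau>s k)) \<omega>))
      \<and> (AE \<omega> in M. V \<theta> \<omega> = (SUP k. ce \<theta> (X (\<tau>s k)) \<omega>))"
    using ts f(2,3) unfolding Vf_def by (simp add: ts(2)[symmetric])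
  then show ?thesis apply - apply (rule exI[where x=\<tau>s]) apply assumption done
qed

end

lemma ereal_sub_fin: "b - g = (c::ereal) \<Longrightarrow> \<bar>g\<bar> \<noteq> \<infinity> \<Longrightarrow> b = c + g"
  by (cases b; cases g; cases c) auto

lemma ereal_cancel_le: "a + g \<le> v + (g::ereal) \<Longrightarrow> \<bar>g\<bar> \<noteq> \<infinity> \<Longrightarrow> a \<le> v"
  by (cases a; cases g; cases v) auto

context snell
begin

interpretation prob_space M by (rule prob)

lemma V_super:
  assumes th: "\<theta> \<in> STs M F Tm" and th': "\<theta>' \<in> STs M F Tm" and le: "AE \<omega> in M. \<theta>' \<omega> \<le> \<theta> \<omega>"
  shows "AE \<omega> in M. ce \<theta>' (V \<theta>) \<omega> \<le> V \<theta>' \<omega>"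
proof -
  interpret S: sigma_finite_subalgebra M "Fsig M F \<theta>" by (rule sfs[OF th])
  interpret S': sigma_finite_subalgebra M "Fsig M F \<theta>'" by (rule sfs[OF th'])
  obtain \<tau>s where ts: "\<And>k::nat. \<tau>s k \<in> STs_from M F Tm \<theta>"
    and inc: "AE \<omega> in M. incseq (\<lambda>k. ce \<theta> (X (\<tau>s k)) \<omega>)"
    and rep: "AE \<omega> in M. V \<theta> \<omega> = (SUP k. ce \<theta> (X (\<tau>s k)) \<omega>)"
    using V_seq[OF th] by blast
  have tsS: "\<tau>s k \<in> STs M F Tm" and tsa: "AE \<omega> in M. \<theta> \<omega> \<le> \<tau>s k \<omega>" for k using STs_fromD[OF ts[of k]] by auto
  have tsF': "\<tau>s k \<in> STs_from M F Tm \<theta>'" for k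
    by (rule STs_fromI[OF tsS]) (use le tsa[of k] in \<open>eventually_elim, simp\<close>)
  define Z where "Z k = (\<lambda>\<omega>. e2ennreal (X (\<tau>s k) \<omega> + enn2ereal (G \<omega>)))" for k
  have Xk[measurable]: "X (\<tau>s k) \<in> borel_measurable M" for k using Xm[OF tsS] .
  have Zm[measurable]: "Z k \<in> borel_measurable M" for k unfolding Z_def by measurable
  have sh: "AE \<omega> in M. \<forall>k. nn_cond_exp M (Fsig M F \<theta>) G \<omega> < top \<and>
     ce \<theta> (X (\<tau>s k)) \<omega> = enn2ereal (nn_cond_exp M (Fsig M F \<theta>) (Z k) \<omega>) - enn2ereal (nn_cond_exp M (Fsig M F \<theta>) G \<omega>)"
    unfolding AE_all_countable Z_def
    by (intro allI S.ce_shift[OF finite_measure_axioms Xk Gm Gint Xlb[OF tsS]])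
  have sh': "AE \<omega> in M. \<forall>k. nn_cond_exp M (Fsig M F \<theta>') G \<omega> < top \<and>
     ce \<theta>' (X (\<tau>s k)) \<omega> = enn2ereal (nn_cond_exp M (Fsig M F \<theta>') (Z k) \<omega>) - enn2ereal (nn_cond_exp M (Fsig M F \<theta>') G \<omega>)"
    unfolding AE_all_countable Z_def
    by (intro allI S'.ce_shift[OF finite_measure_axioms Xk Gm Gint Xlb[OF tsS]])
  define W where "W k = nn_cond_exp M (Fsig M F \<theta>) (Z k)" for k
  have Wm[measurable]: "W k \<in> borel_measurable M" for k unfolding W_def by simp
  have sub': "subalgebra (Fsig M F \<theta>) (Fsig M F \<theta>')"
    unfolding subalgebra_def using Fsig_mono[OF th th' le] by simp
  have nest: "AE \<omega> in M. \<forall>k. nn_cond_exp M (Fsig M F \<theta>') (Z k) \<omega> = nn_cond_exp M (Fsig M F \<theta>') (W k) \<omega>"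
    unfolding AE_all_countable W_def
    by (intro allI S'.nn_cond_exp_nested_subalg[OF subalg[OF th] sub']) simp
  have nestG: "AE \<omega> in M. nn_cond_exp M (Fsig M F \<theta>') G \<omega> = nn_cond_exp M (Fsig M F \<theta>') (nn_cond_exp M (Fsig M F \<theta>) G) \<omega>"
    by (rule S'.nn_cond_exp_nested_subalg[OF subalg[OF th] sub']) simp
  have Vnn: "AE \<omega> in M. 0 \<le> V \<theta> \<omega>" by (rule V_nonneg[OF th])
  have Vnn': "AE \<omega> in M. 0 \<le> V \<theta>' \<omega>" by (rule V_nonneg[OF th'])
  have Vm[measurable]: "V \<theta> \<in> borel_measurable M" using Fsig_measM[OF th Vf_meas[OF th]] .
  have incW: "AE \<omega> in M. incseq (\<lambda>k. W k \<omega>)"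
    using inc sh
  proof eventually_elim
    case (elim \<omega>)
    have g: "\<bar>enn2ereal (nn_cond_exp M (Fsig M F \<theta>) G \<omega>)\<bar> \<noteq> \<infinity>" using elim(2) by (intro ee_fin) simp
    have eq: "enn2ereal (W k \<omega>) = ce \<theta> (X (\<tau>s k)) \<omega> + enn2ereal (nn_cond_exp M (Fsig M F \<theta>) G \<omega>)" for k
      using elim(2) g unfolding W_def by (intro ereal_sub_fin) auto
    show ?case
    proof (rule incseq_SucI)
      fix k
      have "ce \<theta> (X (\<tau>s k)) \<omega> \<le> ce \<theta> (X (\<tau>s (Suc k))) \<omega>" using elim(1) by (simp add: incseq_Suc_iff)
      then have "enn2ereal (W k \<omega>) \<le> enn2ereal (W (Suc k) \<omega>)" unfolding eq by (rule add_right_mono)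
      then show "W k \<omega> \<le> W (Suc k) \<omega>" by (simp add: ee_le)
    qed
  qed
  have sumeq: "AE \<omega> in M. e2ennreal (V \<theta> \<omega>) + nn_cond_exp M (Fsig M F \<theta>) G \<omega> = (SUP k. W k \<omega>)"
    using sh rep Vnn
  proof eventually_elim
    case (elim \<omega>)
    let ?g = "enn2ereal (nn_cond_exp M (Fsig M F \<theta>) G \<omega>)"
    have g: "\<bar>?g\<bar> \<noteq> \<infinity>" using elim(1) by (intro ee_fin) simp
    have eq: "enn2ereal (W k \<omega>) = ce \<theta> (X (\<tau>s k)) \<omega> + ?g" for k
      using elim(1) g unfolding W_def by (intro ereal_sub_fin) auto
    have "enn2ereal (e2ennreal (V \<theta> \<omega>) + nn_cond_exp M (Fsig M F \<theta>) G \<omega>) = V \<theta> \<omega> + ?g"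
      unfolding ee_plus e2_ee using elim(3) by simp
    also have "\<dots> = (SUP k. ce \<theta> (X (\<tau>s k)) \<omega>) + ?g" using elim(2) by simp
    also have "\<dots> = (SUP k. ce \<theta> (X (\<tau>s k)) \<omega> + ?g)"
      using g by (intro SUP_ereal_add_left[symmetric]) auto
    also have "\<dots> = enn2ereal (SUP k. W k \<omega>)" unfolding ee_SUP eq ..
    finally show ?case by (simp add: ee_eq)
  qed
  have A1: "AE \<omega> in M. nn_cond_exp M (Fsig M F \<theta>') (\<lambda>\<omega>. e2ennreal (V \<theta> \<omega>)) \<omega> + nn_cond_exp M (Fsig M F \<theta>') (nn_cond_exp M (Fsig M F \<theta>) G) \<omega>
      = nn_cond_exp M (Fsig M F \<theta>') (\<lambda>\<omega>. e2ennreal (V \<theta> \<omega>) + nn_cond_exp M (Fsig M F \<theta>) G \<omega>) \<omega>"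
    by (rule S'.nn_cond_exp_sum) auto
  have A2: "AE \<omega> in M. nn_cond_exp M (Fsig M F \<theta>') (\<lambda>\<omega>. e2ennreal (V \<theta> \<omega>) + nn_cond_exp M (Fsig M F \<theta>) G \<omega>) \<omega>
      = nn_cond_exp M (Fsig M F \<theta>') (\<lambda>\<omega>. SUP k. W k \<omega>) \<omega>"
    by (rule S'.nn_cond_exp_cong) (use sumeq in auto)
  have A3: "AE \<omega> in M. nn_cond_exp M (Fsig M F \<theta>') (\<lambda>\<omega>. SUP k. W k \<omega>) \<omega> = (SUP k. nn_cond_exp M (Fsig M F \<theta>') (W k) \<omega>)"
    by (rule S'.nn_SUP[OF Wm incW])
  have A4: "AE \<omega> in M. \<forall>k. nn_cond_exp M (Fsig M F \<theta>') (Z k) \<omega> \<le> e2ennreal (V \<theta>' \<omega> + enn2ereal (nn_cond_exp M (Fsig M F \<theta>') G \<omega>))"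
  proof -
    have "AE \<omega> in M. \<forall>k. ce \<theta>' (X (\<tau>s k)) \<omega> \<le> V \<theta>' \<omega>"
      unfolding AE_all_countable by (intro allI Vf_upper[OF th' tsF'])
    with sh' show ?thesis
    proof eventually_elim
      case (elim \<omega>)
      show ?case
      proof
        fix k
        let ?g = "enn2ereal (nn_cond_exp M (Fsig M F \<theta>') G \<omega>)"
        have g: "\<bar>?g\<bar> \<noteq> \<infinity>" using elim(1) by (intro ee_fin) simp
        have "enn2ereal (nn_cond_exp M (Fsig M F \<theta>') (Z k) \<omega>) = ce \<theta>' (X (\<tau>s k)) \<omega> + ?g"
          using elim(1) g by (intro ereal_sub_fin) auto
        also have "\<dots> \<le> V \<theta>' \<omega> + ?g" using elim(2) by (intro add_right_mono) simp
        finally have "e2ennreal (enn2ereal (nn_cond_exp M (Fsig M F \<theta>') (Z k) \<omega>)) \<le> e2ennreal (V \<theta>' \<omega> + ?g)"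
          by (rule e2ennreal_mono)
        then show "nn_cond_exp M (Fsig M F \<theta>') (Z k) \<omega> \<le> e2ennreal (V \<theta>' \<omega> + ?g)" by simp
      qed
    qed
  qed
  have cenn: "AE \<omega> in M. ce \<theta>' (V \<theta>) \<omega> = enn2ereal (nn_cond_exp M (Fsig M F \<theta>') (\<lambda>x. e2ennreal (V \<theta> x)) \<omega>)"
    by (rule S'.ce_nonneg[OF Vm Vnn])
  from A1 A2 A3 A4 nest nestG sh' cenn Vnn' show ?thesis
  proof eventually_elim
    case (elim \<omega>)
    let ?a = "nn_cond_exp M (Fsig M F \<theta>') (\<lambda>x. e2ennreal (V \<theta> x)) \<omega>"
    let ?g = "nn_cond_exp M (Fsig M F \<theta>') G \<omega>"
    have "?a + ?g = (SUP k. nn_cond_exp M (Fsig M F \<theta>') (W k) \<omega>)"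
      using elim(1,2,3,6) by simp
    also have "\<dots> = (SUP k. nn_cond_exp M (Fsig M F \<theta>') (Z k) \<omega>)" using elim(5) by simp
    also have "\<dots> \<le> e2ennreal (V \<theta>' \<omega> + enn2ereal ?g)" using elim(4) by (intro SUP_least) auto
    finally have "enn2ereal (?a + ?g) \<le> enn2ereal (e2ennreal (V \<theta>' \<omega> + enn2ereal ?g))" by (simp add: ee_le)
    then have "enn2ereal ?a + enn2ereal ?g \<le> V \<theta>' \<omega> + enn2ereal ?g"
      unfolding ee_plus e2_ee using elim(9) by simp
    moreover have "\<bar>enn2ereal ?g\<bar> \<noteq> \<infinity>" using elim(7) by (intro ee_fin) simp
    ultimately have "enn2ereal ?a \<le> V \<theta>' \<omega>" by (rule ereal_cancel_le)
    then show ?case using elim(8) by simp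
  qed
qed

lemma V_local_le:
  assumes th: "\<theta> \<in> STs M F Tm" and th': "\<theta>' \<in> STs M F Tm"
  shows "AE \<omega> in M. \<theta> \<omega> = \<theta>' \<omega> \<longrightarrow> V \<theta> \<omega> \<le> V \<theta>' \<omega>"
proof -
  interpret S: sigma_finite_subalgebra M "Fsig M F \<theta>" by (rule sfs[OF th])
  obtain \<tau>s where ts: "\<And>k::nat. \<tau>s k \<in> STs_from M F Tm \<theta>"
    and rep: "AE \<omega> in M. V \<theta> \<omega> = (SUP k. ce \<theta> (X (\<tau>s k)) \<omega>)"
    using V_seq[OF th] by blast
  have tsS: "\<tau>s k \<in> STs M F Tm" and tsa: "AE \<omega> in M. \<theta> \<omega> \<le> \<tau>s k \<omega>" for k using STs_fromD[OF ts[of k]] by auto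
  define A where "A = {\<omega>\<in>space M. \<theta> \<omega> = \<theta>' \<omega>}"
  have A: "A \<in> sets (Fsig M F \<theta>)" unfolding A_def by (rule eq_set_Fsig[OF th th'])
  have AM: "A \<in> sets M" using A Fsig_sub[OF th] by auto
  define \<tau>' where "\<tau>' k = (\<lambda>\<omega>. if \<omega> \<in> A then \<tau>s k \<omega> else Tm)" for k
  have A1: "A \<in> sets (Fsig M F (\<tau>s k))" for k using Fsig_mono[OF tsS th tsa] A by auto
  have A2: "space M - A \<in> sets (Fsig M F (\<lambda>_. Tm))" unfolding Fsig_Tm using AM by auto
  have t'S: "\<tau>' k \<in> STs M F Tm" for k unfolding \<tau>'_def by (rule paste_ST[OF tsS Tm_ST A1 A2])
  have t'F: "\<tau>' k \<in> STs_from M F Tm \<theta>'" for k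
  proof (rule STs_fromI[OF t'S])
    show "AE \<omega> in M. \<theta>' \<omega> \<le> \<tau>' k \<omega>"
      using tsa[of k] AE_space by eventually_elim (use ST_bnd[OF th'] in \<open>auto simp: \<tau>'_def A_def\<close>)
  qed
  have c: "AE \<omega> in M. \<forall>k. \<omega> \<in> A \<longrightarrow> ce \<theta> (X (\<tau>s k)) \<omega> \<le> V \<theta>' \<omega>"
    unfolding AE_all_countable
  proof
    fix k
    have eX: "AE \<omega> in M. \<omega> \<in> A \<longrightarrow> X (\<tau>s k) \<omega> = X (\<tau>' k) \<omega>"
      using adm_loc[OF admX tsS t'S] by eventually_elim (auto simp: \<tau>'_def)
    have c1: "AE \<omega> in M. \<omega> \<in> A \<longrightarrow> ce \<theta> (X (\<tau>s k)) \<omega> = ce \<theta> (X (\<tau>' k)) \<omega>"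
      by (rule S.ce_local[OF Xm[OF tsS] Xm[OF t'S] A eX])
    have c2: "AE \<omega> in M. \<theta> \<omega> = \<theta>' \<omega> \<longrightarrow> ce \<theta> (X (\<tau>' k)) \<omega> = ce \<theta>' (X (\<tau>' k)) \<omega>"
      by (rule ce_switch[OF th th' Xm[OF t'S]])
    have c3: "AE \<omega> in M. ce \<theta>' (X (\<tau>' k)) \<omega> \<le> V \<theta>' \<omega>" by (rule Vf_upper[OF th' t'F])
    from c1 c2 c3 show "AE \<omega> in M. \<omega> \<in> A \<longrightarrow> ce \<theta> (X (\<tau>s k)) \<omega> \<le> V \<theta>' \<omega>"
      by eventually_elim (auto simp: A_def)
  qed
  from c rep AE_space show ?thesis
    by eventually_elim (auto simp: A_def intro!: SUP_least)
qed

lemma V_local: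
  assumes th: "\<theta> \<in> STs M F Tm" and th': "\<theta>' \<in> STs M F Tm"
  shows "AE \<omega> in M. \<theta> \<omega> = \<theta>' \<omega> \<longrightarrow> V \<theta> \<omega> = V \<theta>' \<omega>"
  using V_local_le[OF th th'] V_local_le[OF th' th] by eventually_elim auto

lemma V_adm: "admissible M F Tm V"
  unfolding admissible_def using Vf_meas V_local by blast

end

lemma e2_SUP: "e2ennreal (SUP n::nat. g n) = (SUP n. e2ennreal (g n))"
proof -
  have "e2ennreal (Sup (range g)) = Sup (e2ennreal ` range g)"
    by (rule continuous_at_Sup_mono) (auto simp: mono_def e2ennreal_mono continuous_at_e2ennreal)
  then show ?thesis by (simp add: image_comp)
qed

lemma incseq_limsup: "incseq (f :: nat \<Rightarrow> ereal) \<Longrightarrow> limsup f = (SUP n. f n)"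
  by (rule lim_imp_Limsup) (auto intro: LIMSEQ_SUP)

context stdset
begin

interpretation prob_space M by (rule prob)

definition smart :: "'a family \<Rightarrow> bool" where
  "smart \<phi> \<longleftrightarrow> (\<forall>\<theta>\<in>STs M F Tm. \<forall>\<theta>'\<in>STs M F Tm. (AE \<omega> in M. \<theta>' \<omega> \<le> \<theta> \<omega>) \<longrightarrow>
        (AE \<omega> in M. ereal_cond_exp M (Fsig M F \<theta>') (\<phi> \<theta>) \<omega> \<le> \<phi> \<theta>' \<omega>))"

lemma nonneg_negpart:
  assumes adm: "admissible M F Tm \<phi>" and nn: "\<And>\<theta>. \<theta> \<in> STs M F Tm \<Longrightarrow> AE \<omega> in M. 0 \<le> \<phi> \<theta> \<omega>"
  shows "neg_part_integrable M F Tm \<phi>"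
proof -
  let ?S = "{(\<lambda>x. max 0 (- \<phi> \<theta> x)) | \<theta>. \<theta> \<in> STs M F Tm}"
  have mS: "Y \<in> borel_measurable M" if "Y \<in> ?S" for Y
    using that adm_measM[OF adm] by auto
  have "AE \<omega> in M. esssup_fam M M ?S \<omega> \<le> 0"
  proof (rule ess.esssup_least[OF ess_M mS])
    fix Y assume "Y \<in> ?S"
    then obtain \<theta> where th: "\<theta> \<in> STs M F Tm" and Y: "Y = (\<lambda>x. max 0 (- \<phi> \<theta> x))" by blast
    show "AE \<omega> in M. Y \<omega> \<le> 0" using nn[OF th] by eventually_elim (auto simp: Y)
  qed auto
  then have "(\<integral>\<^sup>+ \<omega>. e2ennreal (esssup_fam M M ?S \<omega>) \<partial>M) = (\<integral>\<^sup>+ \<omega>. 0 \<partial>M)"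
    by (intro nn_integral_cong_AE) (auto elim!: eventually_mono intro: e2ennreal_neg)
  then show ?thesis unfolding neg_part_integrable_def by simp
qed

lemma supermartI:
  assumes "admissible M F Tm \<phi>" "\<And>\<theta>. \<theta> \<in> STs M F Tm \<Longrightarrow> AE \<omega> in M. 0 \<le> \<phi> \<theta> \<omega>" "smart \<phi>"
  shows "supermart_family M F Tm \<phi>"
  using assms nonneg_negpart unfolding supermart_family_def smart_def by blast

lemma supermartD:
  assumes "supermart_family M F Tm \<phi>" "\<theta> \<in> STs M F Tm" "\<theta>' \<in> STs M F Tm" "AE \<omega> in M. \<theta>' \<omega> \<le> \<theta> \<omega>"
  shows "AE \<omega> in M. ereal_cond_exp M (Fsig M F \<theta>') (\<phi> \<theta>) \<omega> \<le> \<phi> \<theta>' \<omega>"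
  using assms unfolding supermart_family_def by blast

lemma lim_family:
  fixes Y :: "nat \<Rightarrow> 'a family"
  assumes adm: "\<And>n. admissible M F Tm (Y n)"
    and nn: "\<And>n \<theta>. \<theta> \<in> STs M F Tm \<Longrightarrow> AE \<omega> in M. 0 \<le> Y n \<theta> \<omega>"
    and sm: "\<And>n. smart (Y n)"
    and inc: "\<And>n \<theta>. \<theta> \<in> STs M F Tm \<Longrightarrow> AE \<omega> in M. Y n \<theta> \<omega> \<le> Y (Suc n) \<theta> \<omega>"
  defines "L \<equiv> (\<lambda>\<theta> \<omega>. limsup (\<lambda>n. Y n \<theta> \<omega>))"
  shows "admissible M F Tm L" and L_sup: "\<And>\<theta>. \<theta> \<in> STs M F Tm \<Longrightarrow> AE \<omega> in M. L \<theta> \<omega> = (SUP n. Y n \<theta> \<omega>)"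
    and L_nn: "\<And>\<theta>. \<theta> \<in> STs M F Tm \<Longrightarrow> AE \<omega> in M. 0 \<le> L \<theta> \<omega>" and "smart L"
proof -
  have incA: "AE \<omega> in M. incseq (\<lambda>n. Y n \<theta> \<omega>)" if th: "\<theta> \<in> STs M F Tm" for \<theta>
  proof -
    have "AE \<omega> in M. \<forall>n. Y n \<theta> \<omega> \<le> Y (Suc n) \<theta> \<omega>" unfolding AE_all_countable using inc[OF th] by blast
    then show ?thesis by eventually_elim (simp add: incseq_Suc_iff)
  qed
  show sup: "AE \<omega> in M. L \<theta> \<omega> = (SUP n. Y n \<theta> \<omega>)" if th: "\<theta> \<in> STs M F Tm" for \<theta>
    using incA[OF th] by eventually_elim (simp add: L_def incseq_limsup)
  show Lnn: "AE \<omega> in M. 0 \<le> L \<theta> \<omega>" if th: "\<theta> \<in> STs M F Tm" for \<theta>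
    using sup[OF th] nn[OF th, of 0] by eventually_elim (auto intro: order_trans[OF _ SUP_upper])
  have Lm: "L \<theta> \<in> borel_measurable (Fsig M F \<theta>)" if th: "\<theta> \<in> STs M F Tm" for \<theta>
    unfolding L_def using adm_meas[OF adm th] by measurable
  have LmM[measurable]: "L \<theta> \<in> borel_measurable M" if th: "\<theta> \<in> STs M F Tm" for \<theta>
    using Fsig_measM[OF th Lm[OF th]] .
  show "admissible M F Tm L"
    unfolding admissible_def
  proof (intro conjI ballI)
    fix \<theta> \<theta>' assume th: "\<theta> \<in> STs M F Tm" and th': "\<theta>' \<in> STs M F Tm"
    have "AE \<omega> in M. \<forall>n. \<theta> \<omega> = \<theta>' \<omega> \<longrightarrow> Y n \<theta> \<omega> = Y n \<theta>' \<omega>"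
      unfolding AE_all_countable using adm_loc[OF adm th th'] by blast
    then show "AE \<omega> in M. \<theta> \<omega> = \<theta>' \<omega> \<longrightarrow> L \<theta> \<omega> = L \<theta>' \<omega>"
      by eventually_elim (simp add: L_def)
  qed (rule Lm)
  show "smart L"
    unfolding smart_def
  proof (intro ballI impI)
    fix \<theta> \<theta>' assume th: "\<theta> \<in> STs M F Tm" and th': "\<theta>' \<in> STs M F Tm" and le: "AE \<omega> in M. \<theta>' \<omega> \<le> \<theta> \<omega>"
    interpret S': sigma_finite_subalgebra M "Fsig M F \<theta>'" by (rule sfs[OF th'])
    have Ym[measurable]: "Y n \<theta> \<in> borel_measurable M" for n using adm_measM[OF adm th] .
    have LmT[measurable]: "L \<theta> \<in> borel_measurable M" using LmM[OF th] .
    have e2m[measurable]: "(\<lambda>\<omega>. e2ennreal (Y n \<theta> \<omega>)) \<in> borel_measurable M" for n by measurable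
    have ce1: "AE \<omega> in M. ereal_cond_exp M (Fsig M F \<theta>') (L \<theta>) \<omega> = enn2ereal (nn_cond_exp M (Fsig M F \<theta>') (\<lambda>x. e2ennreal (L \<theta> x)) \<omega>)"
      by (rule S'.ce_nonneg[OF LmM[OF th] Lnn[OF th]])
    have cong: "AE \<omega> in M. nn_cond_exp M (Fsig M F \<theta>') (\<lambda>x. e2ennreal (L \<theta> x)) \<omega> = nn_cond_exp M (Fsig M F \<theta>') (\<lambda>x. SUP n. e2ennreal (Y n \<theta> x)) \<omega>"
      by (rule S'.nn_cond_exp_cong) (use sup[OF th] in \<open>auto elim!: eventually_mono simp: e2_SUP\<close>)
    have incE: "AE \<omega> in M. incseq (\<lambda>n. e2ennreal (Y n \<theta> \<omega>))"
      using incA[OF th] by eventually_elim (auto simp: incseq_def intro: e2ennreal_mono)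
    have msup: "AE \<omega> in M. nn_cond_exp M (Fsig M F \<theta>') (\<lambda>x. SUP n. e2ennreal (Y n \<theta> x)) \<omega> = (SUP n. nn_cond_exp M (Fsig M F \<theta>') (\<lambda>x. e2ennreal (Y n \<theta> x)) \<omega>)"
      by (rule S'.nn_SUP[OF e2m incE])
    have each: "AE \<omega> in M. \<forall>n. nn_cond_exp M (Fsig M F \<theta>') (\<lambda>x. e2ennreal (Y n \<theta> x)) \<omega> \<le> e2ennreal (Y n \<theta>' \<omega>)"
      unfolding AE_all_countable
    proof
      fix n
      have "AE \<omega> in M. ereal_cond_exp M (Fsig M F \<theta>') (Y n \<theta>) \<omega> \<le> Y n \<theta>' \<omega>"
        using sm[of n] th th' le unfolding smart_def by blast
      moreover have "AE \<omega> in M. ereal_cond_exp M (Fsig M F \<theta>') (Y n \<theta>) \<omega> = enn2ereal (nn_cond_exp M (Fsig M F \<theta>') (\<lambda>x. e2ennreal (Y n \<theta> x)) \<omega>)"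
        by (rule S'.ce_nonneg[OF Ym nn[OF th]])
      ultimately show "AE \<omega> in M. nn_cond_exp M (Fsig M F \<theta>') (\<lambda>x. e2ennreal (Y n \<theta> x)) \<omega> \<le> e2ennreal (Y n \<theta>' \<omega>)"
      proof eventually_elim
        case (elim \<omega>)
        then have "e2ennreal (enn2ereal (nn_cond_exp M (Fsig M F \<theta>') (\<lambda>x. e2ennreal (Y n \<theta> x)) \<omega>)) \<le> e2ennreal (Y n \<theta>' \<omega>)"
          by (intro e2ennreal_mono) simp
        then show ?case by simp
      qed
    qed
    from ce1 cong msup each sup[OF th'] Lnn[OF th'] show "AE \<omega> in M. ereal_cond_exp M (Fsig M F \<theta>') (L \<theta>) \<omega> \<le> L \<theta>' \<omega>"
    proof eventually_elim
      case (elim \<omega>)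
      have "nn_cond_exp M (Fsig M F \<theta>') (\<lambda>x. e2ennreal (L \<theta> x)) \<omega> \<le> (SUP n. e2ennreal (Y n \<theta>' \<omega>))"
        using elim(2,3,4) by (auto intro!: SUP_mono)
      also have "\<dots> = e2ennreal (L \<theta>' \<omega>)" using elim(5) by (simp add: e2_SUP)
      finally have "enn2ereal (nn_cond_exp M (Fsig M F \<theta>') (\<lambda>x. e2ennreal (L \<theta> x)) \<omega>) \<le> enn2ereal (e2ennreal (L \<theta>' \<omega>))"
        by (simp add: ee_le)
      then show ?case using elim(1,6) by (simp add: e2_ee)
    qed
  qed
qed

end

lemma J_0: "Jn M F Tm \<xi> \<zeta> 0 = (\<lambda>\<theta> \<omega>. 0)" and J'_0: "J'n M F Tm \<xi> \<zeta> 0 = (\<lambda>\<theta> \<omega>. 0)"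
  unfolding Jn_def J'n_def by simp_all

lemma J_Suc: "Jn M F Tm \<xi> \<zeta> (Suc n) = Vf M F Tm (\<lambda>\<tau> \<omega>. J'n M F Tm \<xi> \<zeta> n \<tau> \<omega> + \<xi> \<tau> \<omega>)"
  unfolding Jn_def J'n_def Vf_def by simp

lemma J'_Suc: "J'n M F Tm \<xi> \<zeta> (Suc n) = Vf M F Tm (\<lambda>\<sigma> \<omega>. Jn M F Tm \<xi> \<zeta> n \<sigma> \<omega> - \<zeta> \<sigma> \<omega>)"
  unfolding Jn_def J'n_def Vf_def by simp

context stdset
begin

interpretation prob_space M by (rule prob)

lemma adm_const: "admissible M F Tm (\<lambda>\<theta> \<omega>. c)"
  unfolding admissible_def by auto

lemma adm_plus: "admissible M F Tm A \<Longrightarrow> admissible M F Tm B \<Longrightarrow> admissible M F Tm (\<lambda>\<tau> \<omega>. A \<tau> \<omega> + B \<tau> \<omega>)"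
  unfolding admissible_def
proof (intro conjI ballI, goal_cases)
  case (1 \<theta>)
  then have [measurable]: "A \<theta> \<in> borel_measurable (Fsig M F \<theta>)" "B \<theta> \<in> borel_measurable (Fsig M F \<theta>)"
    by blast+
  show ?case by measurable
next
  case (2 \<theta> \<theta>')
  then have "AE \<omega> in M. \<theta> \<omega> = \<theta>' \<omega> \<longrightarrow> A \<theta> \<omega> = A \<theta>' \<omega>" "AE \<omega> in M. \<theta> \<omega> = \<theta>' \<omega> \<longrightarrow> B \<theta> \<omega> = B \<theta>' \<omega>" by blast+
  then show ?case by eventually_elim auto
qed

lemma adm_minus: "admissible M F Tm A \<Longrightarrow> admissible M F Tm B \<Longrightarrow> admissible M F Tm (\<lambda>\<tau> \<omega>. A \<tau> \<omega> - B \<tau> \<omega>)"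
  unfolding admissible_def
proof (intro conjI ballI, goal_cases)
  case (1 \<theta>)
  then have [measurable]: "A \<theta> \<in> borel_measurable (Fsig M F \<theta>)" "B \<theta> \<in> borel_measurable (Fsig M F \<theta>)"
    by blast+
  show ?case by measurable
next
  case (2 \<theta> \<theta>')
  then have "AE \<omega> in M. \<theta> \<omega> = \<theta>' \<omega> \<longrightarrow> A \<theta> \<omega> = A \<theta>' \<omega>" "AE \<omega> in M. \<theta> \<omega> = \<theta>' \<omega> \<longrightarrow> B \<theta> \<omega> = B \<theta>' \<omega>" by blast+
  then show ?case by eventually_elim auto
qed

lemma smart_zero: "smart (\<lambda>\<theta> \<omega>. 0)"
  unfolding smart_def
proof (intro ballI impI)
  fix \<theta> \<theta>' assume "\<theta> \<in> STs M F Tm" "\<theta>' \<in> STs M F Tm"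
  then show "AE \<omega> in M. ereal_cond_exp M (Fsig M F \<theta>') (\<lambda>\<omega>. 0) \<omega> \<le> 0"
    using sigma_finite_subalgebra.ce_zero[OF sfs, of \<theta>'] by (auto elim!: eventually_mono)
qed

end

locale game = stdset +
  fixes \<xi> \<zeta> :: "'a family"
  assumes adm_xi: "admissible M F Tm \<xi>" and adm_zeta: "admissible M F Tm \<zeta>"
    and xi_neg: "neg_part_integrable M F Tm \<xi>"
    and zeta_pos: "pos_part_integrable M F Tm \<zeta>"
    and xi_T: "AE \<omega> in M. \<xi> (\<lambda>_. Tm) \<omega> = 0"
    and zeta_T: "AE \<omega> in M. \<zeta> (\<lambda>_. Tm) \<omega> = 0"
begin

interpretation prob_space M by (rule prob)

abbreviation "J \<equiv> Jn M F Tm \<xi> \<zeta>"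
abbreviation "J' \<equiv> J'n M F Tm \<xi> \<zeta>"

definition "Gx = (\<lambda>\<omega>. e2ennreal (esssup_fam M M {(\<lambda>x. max 0 (- \<xi> \<theta> x)) | \<theta>. \<theta> \<in> STs M F Tm} \<omega>))"
definition "Gz = (\<lambda>\<omega>. e2ennreal (esssup_fam M M {(\<lambda>x. max 0 (\<zeta> \<theta> x)) | \<theta>. \<theta> \<in> STs M F Tm} \<omega>))"

lemma Gx_m[measurable]: "Gx \<in> borel_measurable M"
proof -
  have "esssup_fam M M {(\<lambda>x. max 0 (- \<xi> \<theta> x)) | \<theta>. \<theta> \<in> STs M F Tm} \<in> borel_measurable M"
    by (rule ess.esssup_meas[OF ess_M]) (use adm_measM[OF adm_xi] in auto)
  then show ?thesis unfolding Gx_def by measurable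
qed

lemma Gz_m[measurable]: "Gz \<in> borel_measurable M"
proof -
  have "esssup_fam M M {(\<lambda>x. max 0 (\<zeta> \<theta> x)) | \<theta>. \<theta> \<in> STs M F Tm} \<in> borel_measurable M"
    by (rule ess.esssup_meas[OF ess_M]) (use adm_measM[OF adm_zeta] in auto)
  then show ?thesis unfolding Gz_def by measurable
qed

lemma Gx_int: "(\<integral>\<^sup>+\<omega>. Gx \<omega> \<partial>M) < top"
  using xi_neg unfolding neg_part_integrable_def Gx_def by (simp add: infinity_ennreal_def)

lemma Gz_int: "(\<integral>\<^sup>+\<omega>. Gz \<omega> \<partial>M) < top"
  using zeta_pos unfolding pos_part_integrable_def Gz_def by (simp add: infinity_ennreal_def)

lemma xi_lb: assumes th: "\<theta> \<in> STs M F Tm" shows "AE \<omega> in M. - enn2ereal (Gx \<omega>) \<le> \<xi> \<theta> \<omega>"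
proof -
  have "AE \<omega> in M. max 0 (- \<xi> \<theta> \<omega>) \<le> esssup_fam M M {(\<lambda>x. max 0 (- \<xi> \<theta> x)) | \<theta>. \<theta> \<in> STs M F Tm} \<omega>"
    by (rule ess.esssup_upper[OF ess_M, where X="\<lambda>x. max 0 (- \<xi> \<theta> x)"]) (use adm_measM[OF adm_xi] th in auto)
  then show ?thesis unfolding Gx_def e2_ee
    by eventually_elim (auto simp: ereal_uminus_le_reorder)
qed

lemma zeta_ub: assumes th: "\<theta> \<in> STs M F Tm" shows "AE \<omega> in M. - enn2ereal (Gz \<omega>) \<le> - \<zeta> \<theta> \<omega>"
proof -
  have "AE \<omega> in M. max 0 (\<zeta> \<theta> \<omega>) \<le> esssup_fam M M {(\<lambda>x. max 0 (\<zeta> \<theta> x)) | \<theta>. \<theta> \<in> STs M F Tm} \<omega>"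
    by (rule ess.esssup_upper[OF ess_M, where X="\<lambda>x. max 0 (\<zeta> \<theta> x)"]) (use adm_measM[OF adm_zeta] th in auto)
  then show ?thesis unfolding Gz_def e2_ee
    by eventually_elim auto
qed

lemma Gx_fin: "AE \<omega> in M. Gx \<omega> < top"
  using nn_integral_PInf_AE[of Gx M] Gx_int by (auto simp: infinity_ennreal_def less_top)

lemma Gz_fin: "AE \<omega> in M. Gz \<omega> < top"
  using nn_integral_PInf_AE[of Gz M] Gz_int by (auto simp: infinity_ennreal_def less_top)

lemma xi_fin: assumes th: "\<theta> \<in> STs M F Tm" shows "AE \<omega> in M. - \<infinity> < \<xi> \<theta> \<omega>"
  using xi_lb[OF th] Gx_fin
proof eventually_elim
  case (elim \<omega>)
  have "\<bar>enn2ereal (Gx \<omega>)\<bar> \<noteq> \<infinity>" using elim(2) by (rule ee_fin)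
  then have "- \<infinity> < - enn2ereal (Gx \<omega>)" by auto
  then show ?case using elim(1) by (rule less_le_trans)
qed

lemma zeta_fin: assumes th: "\<theta> \<in> STs M F Tm" shows "AE \<omega> in M. \<zeta> \<theta> \<omega> < \<infinity>"
  using zeta_ub[OF th] Gz_fin
proof eventually_elim
  case (elim \<omega>)
  have "\<bar>enn2ereal (Gz \<omega>)\<bar> \<noteq> \<infinity>" using elim(2) by (rule ee_fin)
  then have "enn2ereal (Gz \<omega>) < \<infinity>" by auto
  moreover have "\<zeta> \<theta> \<omega> \<le> enn2ereal (Gz \<omega>)" using elim(1) by simp
  ultimately show ?case by (rule le_less_trans[rotated])
qed

definition "Pn n \<longleftrightarrow> admissible M F Tm (J n) \<and> admissible M F Tm (J' n) \<and>
    (\<forall>\<theta>\<in>STs M F Tm. AE \<omega> in M. 0 \<le> J n \<theta> \<omega>) \<and> (\<forall>\<theta>\<in>STs M F Tm. AE \<omega> in M. 0 \<le> J' n \<theta> \<omega>) \<and>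
    smart (J n) \<and> smart (J' n)"

lemma snell1: assumes "Pn n" shows "snell M F Tm (\<lambda>\<tau> \<omega>. J' n \<tau> \<omega> + \<xi> \<tau> \<omega>) Gx"
proof (intro snell.intro snell_axioms.intro)
  show "stdset M F Tm" by (rule stdset_axioms)
  show "admissible M F Tm (\<lambda>\<tau> \<omega>. J' n \<tau> \<omega> + \<xi> \<tau> \<omega>)"
    using assms adm_plus adm_xi unfolding Pn_def by blast
  show "Gx \<in> borel_measurable M" by simp
  show "(\<integral>\<^sup>+\<omega>. Gx \<omega> \<partial>M) < top" by (rule Gx_int)
  fix \<tau> assume t: "\<tau> \<in> STs M F Tm"
  have "AE \<omega> in M. 0 \<le> J' n \<tau> \<omega>" using assms t unfolding Pn_def by blast
  with xi_lb[OF t] show "AE \<omega> in M. - enn2ereal (Gx \<omega>) \<le> J' n \<tau> \<omega> + \<xi> \<tau> \<omega>"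
    by eventually_elim (use add_mono[of 0 "J' n \<tau> _" "- enn2ereal (Gx _)" "\<xi> \<tau> _"] in simp)
next
  have "AE \<omega> in M. 0 \<le> J' n (\<lambda>_. Tm) \<omega>" using assms Tm_ST unfolding Pn_def by blast
  with xi_T show "AE \<omega> in M. 0 \<le> J' n (\<lambda>_. Tm) \<omega> + \<xi> (\<lambda>_. Tm) \<omega>" by eventually_elim simp
qed

lemma snell2: assumes "Pn n" shows "snell M F Tm (\<lambda>\<sigma> \<omega>. J n \<sigma> \<omega> - \<zeta> \<sigma> \<omega>) Gz"
proof (intro snell.intro snell_axioms.intro)
  show "stdset M F Tm" by (rule stdset_axioms)
  show "admissible M F Tm (\<lambda>\<tau> \<omega>. J n \<tau> \<omega> - \<zeta> \<tau> \<omega>)"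
    using assms adm_minus adm_zeta unfolding Pn_def by blast
  show "Gz \<in> borel_measurable M" by simp
  show "(\<integral>\<^sup>+\<omega>. Gz \<omega> \<partial>M) < top" by (rule Gz_int)
  fix \<tau> assume t: "\<tau> \<in> STs M F Tm"
  have "AE \<omega> in M. 0 \<le> J n \<tau> \<omega>" using assms t unfolding Pn_def by blast
  with zeta_ub[OF t] show "AE \<omega> in M. - enn2ereal (Gz \<omega>) \<le> J n \<tau> \<omega> - \<zeta> \<tau> \<omega>"
    by eventually_elim (use add_mono[of 0 "J n \<tau> _" "- enn2ereal (Gz _)" "- \<zeta> \<tau> _"] in \<open>simp add: minus_ereal_def\<close>)
next
  have "AE \<omega> in M. 0 \<le> J n (\<lambda>_. Tm) \<omega>" using assms Tm_ST unfolding Pn_def by blast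
  with zeta_T show "AE \<omega> in M. 0 \<le> J n (\<lambda>_. Tm) \<omega> - \<zeta> (\<lambda>_. Tm) \<omega>" by eventually_elim simp
qed

lemma Pn_all: "Pn n"
proof (induction n)
  case 0
  show ?case unfolding Pn_def J_0 J'_0 by (simp add: adm_const smart_zero)
next
  case (Suc n)
  interpret A: snell M F Tm "\<lambda>\<tau> \<omega>. J' n \<tau> \<omega> + \<xi> \<tau> \<omega>" Gx by (rule snell1[OF Suc])
  interpret B: snell M F Tm "\<lambda>\<sigma> \<omega>. J n \<sigma> \<omega> - \<zeta> \<sigma> \<omega>" Gz by (rule snell2[OF Suc])
  have 1: "admissible M F Tm (J (Suc n))" unfolding J_Suc by (rule A.V_adm)
  have 2: "admissible M F Tm (J' (Suc n))" unfolding J'_Suc by (rule B.V_adm)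
  have 3: "\<forall>\<theta>\<in>STs M F Tm. AE \<omega> in M. 0 \<le> J (Suc n) \<theta> \<omega>" unfolding J_Suc using A.V_nonneg by blast
  have 4: "\<forall>\<theta>\<in>STs M F Tm. AE \<omega> in M. 0 \<le> J' (Suc n) \<theta> \<omega>" unfolding J'_Suc using B.V_nonneg by blast
  have 5: "smart (J (Suc n))" unfolding J_Suc smart_def using A.V_super by blast
  have 6: "smart (J' (Suc n))" unfolding J'_Suc smart_def using B.V_super by blast
  show ?case unfolding Pn_def using 1 2 3 4 5 6 by blast
qed

end

lemma L1:
  fixes a x h h' z :: ereal
  assumes "a \<le> h'" "x \<le> h - h'" "h - h' \<le> z" "z < \<infinity>" "- \<infinity> < x" "0 \<le> h'"
  shows "a + x \<le> h"
  using assms by (cases a; cases x; cases h; cases h'; cases z) auto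

lemma L2:
  fixes j x h h' z :: ereal
  assumes "j \<le> h" "h - h' \<le> z" "x \<le> h - h'" "- \<infinity> < x" "z < \<infinity>" "0 \<le> h'"
  shows "j - z \<le> h'"
  using assms by (cases j; cases x; cases h; cases h'; cases z) auto

lemma C1: fixes a x j :: ereal assumes "a + x \<le> j" "\<bar>a\<bar> \<noteq> \<infinity>" shows "x \<le> j - a"
  using assms by (cases a; cases x; cases j) auto

lemma C2: fixes j z j' :: ereal assumes "j - z \<le> j'" "\<bar>j'\<bar> \<noteq> \<infinity>" shows "j - j' \<le> z"
  using assms by (cases j; cases z; cases j') auto

lemma C3: fixes h h' z :: ereal assumes "h - h' \<le> z" "z < \<infinity>" "h' < \<infinity>" "0 \<le> h'" shows "h < \<infinity>"
  using assms by (cases h; cases z; cases h') auto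

context game
begin

interpretation prob_space M by (rule prob)

lemma J_adm: "admissible M F Tm (J n)" and J'_adm: "admissible M F Tm (J' n)"
  and J_nn: "\<theta> \<in> STs M F Tm \<Longrightarrow> AE \<omega> in M. 0 \<le> J n \<theta> \<omega>"
  and J'_nn: "\<theta> \<in> STs M F Tm \<Longrightarrow> AE \<omega> in M. 0 \<le> J' n \<theta> \<omega>"
  and J_sm: "smart (J n)" and J'_sm: "smart (J' n)"
  using Pn_all[of n] unfolding Pn_def by blast+

lemma Xm1: "\<tau> \<in> STs M F Tm \<Longrightarrow> (\<lambda>\<omega>. J' n \<tau> \<omega> + \<xi> \<tau> \<omega>) \<in> borel_measurable M"
  using adm_measM[OF adm_plus[OF J'_adm adm_xi]] by simp

lemma Xm2: "\<tau> \<in> STs M F Tm \<Longrightarrow> (\<lambda>\<omega>. J n \<tau> \<omega> - \<zeta> \<tau> \<omega>) \<in> borel_measurable M"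
  using adm_measM[OF adm_minus[OF J_adm adm_zeta]] by simp

lemma Qn: "\<forall>\<theta>\<in>STs M F Tm. (AE \<omega> in M. J n \<theta> \<omega> \<le> J (Suc n) \<theta> \<omega>) \<and> (AE \<omega> in M. J' n \<theta> \<omega> \<le> J' (Suc n) \<theta> \<omega>)"
proof (induction n)
  case 0
  show ?case
  proof (intro ballI conjI)
    fix \<theta> assume th: "\<theta> \<in> STs M F Tm"
    show "AE \<omega> in M. J 0 \<theta> \<omega> \<le> J (Suc 0) \<theta> \<omega>" using J_nn[OF th, of "Suc 0"] unfolding J_0 by simp
    show "AE \<omega> in M. J' 0 \<theta> \<omega> \<le> J' (Suc 0) \<theta> \<omega>" using J'_nn[OF th, of "Suc 0"] unfolding J'_0 by simp
  qed
next
  case (Suc n)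
  show ?case
  proof (intro ballI conjI)
    fix \<theta> assume th: "\<theta> \<in> STs M F Tm"
    show "AE \<omega> in M. J (Suc n) \<theta> \<omega> \<le> J (Suc (Suc n)) \<theta> \<omega>"
      unfolding J_Suc[of _ _ _ _ _ "Suc n"] J_Suc[of _ _ _ _ _ n]
    proof (rule Vf_mono[OF th Xm1 Xm1])
      fix \<tau> assume t: "\<tau> \<in> STs M F Tm"
      show "AE \<omega> in M. J' n \<tau> \<omega> + \<xi> \<tau> \<omega> \<le> J' (Suc n) \<tau> \<omega> + \<xi> \<tau> \<omega>"
        using conjunct2[OF Suc[rule_format, OF t]] by eventually_elim (rule add_right_mono)
    qed
    show "AE \<omega> in M. J' (Suc n) \<theta> \<omega> \<le> J' (Suc (Suc n)) \<theta> \<omega>"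
      unfolding J'_Suc[of _ _ _ _ _ "Suc n"] J'_Suc[of _ _ _ _ _ n]
    proof (rule Vf_mono[OF th Xm2 Xm2])
      fix \<tau> assume t: "\<tau> \<in> STs M F Tm"
      show "AE \<omega> in M. J n \<tau> \<omega> - \<zeta> \<tau> \<omega> \<le> J (Suc n) \<tau> \<omega> - \<zeta> \<tau> \<omega>"
        using conjunct1[OF Suc[rule_format, OF t]] by eventually_elim (rule ereal_minus_mono, auto)
    qed
  qed
qed

lemma lb1: "\<theta> \<in> STs M F Tm \<Longrightarrow> AE \<omega> in M. J' n \<theta> \<omega> + \<xi> \<theta> \<omega> \<le> J (Suc n) \<theta> \<omega>"
proof -
  assume th: "\<theta> \<in> STs M F Tm"
  interpret A: snell M F Tm "\<lambda>\<tau> \<omega>. J' n \<tau> \<omega> + \<xi> \<tau> \<omega>" Gx by (rule snell1[OF Pn_all])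
  show ?thesis unfolding J_Suc using A.V_ge[OF th] by simp
qed

lemma lb2: "\<theta> \<in> STs M F Tm \<Longrightarrow> AE \<omega> in M. J n \<theta> \<omega> - \<zeta> \<theta> \<omega> \<le> J' (Suc n) \<theta> \<omega>"
proof -
  assume th: "\<theta> \<in> STs M F Tm"
  interpret A: snell M F Tm "\<lambda>\<sigma> \<omega>. J n \<sigma> \<omega> - \<zeta> \<sigma> \<omega>" Gz by (rule snell2[OF Pn_all])
  show ?thesis unfolding J'_Suc using A.V_ge[OF th] by simp
qed

abbreviation "JL \<equiv> Jlim M F Tm \<xi> \<zeta>"
abbreviation "J'L \<equiv> J'lim M F Tm \<xi> \<zeta>"

lemma JL_props: "admissible M F Tm JL" "\<And>\<theta>. \<theta> \<in> STs M F Tm \<Longrightarrow> AE \<omega> in M. JL \<theta> \<omega> = (SUP n. J n \<theta> \<omega>)"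
    "\<And>\<theta>. \<theta> \<in> STs M F Tm \<Longrightarrow> AE \<omega> in M. 0 \<le> JL \<theta> \<omega>" "smart JL"
  unfolding Jlim_def using lim_family[of J, OF J_adm J_nn J_sm] Qn by blast+

lemma J'L_props: "admissible M F Tm J'L" "\<And>\<theta>. \<theta> \<in> STs M F Tm \<Longrightarrow> AE \<omega> in M. J'L \<theta> \<omega> = (SUP n. J' n \<theta> \<omega>)"
    "\<And>\<theta>. \<theta> \<in> STs M F Tm \<Longrightarrow> AE \<omega> in M. 0 \<le> J'L \<theta> \<omega>" "smart J'L"
  unfolding J'lim_def using lim_family[of J', OF J'_adm J'_nn J'_sm] Qn by blast+

lemma JL_sm: "supermart_family M F Tm JL"
  using supermartI JL_props by blast

lemma J'L_sm: "supermart_family M F Tm J'L"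
  using supermartI J'L_props by blast

lemma JL_fin:
  assumes fin0: "AE \<omega> in M. JL (\<lambda>_. 0) \<omega> < \<infinity>" and th: "\<theta> \<in> STs M F Tm"
  shows "AE \<omega> in M. JL \<theta> \<omega> < \<infinity>"
proof -
  interpret S: sigma_finite_subalgebra M "Fsig M F (\<lambda>_. 0)" by (rule sfs[OF zero_ST])
  have Lm[measurable]: "JL \<theta> \<in> borel_measurable M" using adm_measM[OF JL_props(1) th] .
  have le0: "AE \<omega> in M. 0 \<le> \<theta> \<omega>" using ST_bnd[OF th] by (auto intro: AE_I2)
  have sup: "AE \<omega> in M. ereal_cond_exp M (Fsig M F (\<lambda>_. 0)) (JL \<theta>) \<omega> \<le> JL (\<lambda>_. 0) \<omega>"
    using JL_props(4)[unfolded smart_def, rule_format, OF th zero_ST le0] .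
  have cen: "AE \<omega> in M. ereal_cond_exp M (Fsig M F (\<lambda>_. 0)) (JL \<theta>) \<omega> = enn2ereal (nn_cond_exp M (Fsig M F (\<lambda>_. 0)) (\<lambda>x. e2ennreal (JL \<theta> x)) \<omega>)"
    by (rule S.ce_nonneg[OF Lm JL_props(3)[OF th]])
  have "AE \<omega> in M. nn_cond_exp M (Fsig M F (\<lambda>_. 0)) (\<lambda>x. e2ennreal (JL \<theta> x)) \<omega> < top"
    using sup cen fin0
  proof eventually_elim
    case (elim \<omega>)
    have "enn2ereal (nn_cond_exp M (Fsig M F (\<lambda>_. 0)) (\<lambda>x. e2ennreal (JL \<theta> x)) \<omega>) \<le> JL (\<lambda>_. 0) \<omega>"
      using elim(1,2) by simp
    then have "enn2ereal (nn_cond_exp M (Fsig M F (\<lambda>_. 0)) (\<lambda>x. e2ennreal (JL \<theta> x)) \<omega>) < \<infinity>"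
      using elim(3) by (rule le_less_trans)
    then have "enn2ereal (nn_cond_exp M (Fsig M F (\<lambda>_. 0)) (\<lambda>x. e2ennreal (JL \<theta> x)) \<omega>) \<noteq> \<infinity>" by simp
    then show ?case by (simp add: less_top)
  qed
  then have "AE \<omega> in M. e2ennreal (JL \<theta> \<omega>) < top"
    by (rule S.nn_finite[OF finite_measure_axioms, rotated]) measurable
  then show ?thesis
  proof eventually_elim
    case (elim \<omega>)
    show ?case
    proof (rule ccontr)
      assume "\<not> JL \<theta> \<omega> < \<infinity>"
      then have "JL \<theta> \<omega> = \<infinity>" by simp
      with elim show False by simp
    qed
  qed
qed

lemma construct:
  assumes fin0: "AE \<omega> in M. JL (\<lambda>_. 0) \<omega> < \<infinity>"
  shows "AE \<omega> in M. J'L (\<lambda>_. 0) \<omega> < \<infinity>"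
    and "\<And>\<theta>. \<theta> \<in> STs M F Tm \<Longrightarrow> AE \<omega> in M. \<xi> \<theta> \<omega> \<le> JL \<theta> \<omega> - J'L \<theta> \<omega> \<and> JL \<theta> \<omega> - J'L \<theta> \<omega> \<le> \<zeta> \<theta> \<omega>"
proof -
  have main: "AE \<omega> in M. J'L \<theta> \<omega> < \<infinity> \<and> \<xi> \<theta> \<omega> \<le> JL \<theta> \<omega> - J'L \<theta> \<omega> \<and> JL \<theta> \<omega> - J'L \<theta> \<omega> \<le> \<zeta> \<theta> \<omega>"
    if th: "\<theta> \<in> STs M F Tm" for \<theta>
  proof -
    have a1: "AE \<omega> in M. \<forall>n. J' n \<theta> \<omega> + \<xi> \<theta> \<omega> \<le> J (Suc n) \<theta> \<omega>"
      unfolding AE_all_countable using lb1[OF th] by blast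
    have a2: "AE \<omega> in M. \<forall>n. J n \<theta> \<omega> - \<zeta> \<theta> \<omega> \<le> J' (Suc n) \<theta> \<omega>"
      unfolding AE_all_countable using lb2[OF th] by blast
    from a1 a2 JL_props(2)[OF th] J'L_props(2)[OF th] JL_props(3)[OF th] J'L_props(3)[OF th]
      JL_fin[OF fin0 th] xi_fin[OF th]
    show ?thesis
    proof eventually_elim
      case (elim \<omega>)
      have "(SUP n. J' n \<theta> \<omega> + \<xi> \<theta> \<omega>) \<le> JL \<theta> \<omega>"
      proof (rule SUP_least)
        fix n
        have "J' n \<theta> \<omega> + \<xi> \<theta> \<omega> \<le> J (Suc n) \<theta> \<omega>" using elim(1) by blast
        also have "\<dots> \<le> JL \<theta> \<omega>" unfolding elim(3) by (rule SUP_upper) simp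
        finally show "J' n \<theta> \<omega> + \<xi> \<theta> \<omega> \<le> JL \<theta> \<omega>" .
      qed
      moreover have "(SUP n. J' n \<theta> \<omega> + \<xi> \<theta> \<omega>) = J'L \<theta> \<omega> + \<xi> \<theta> \<omega>"
        unfolding elim(4) using elim(8) by (intro SUP_ereal_add_left) auto
      ultimately have s1: "J'L \<theta> \<omega> + \<xi> \<theta> \<omega> \<le> JL \<theta> \<omega>" by simp
      have fin': "J'L \<theta> \<omega> < \<infinity>"
      proof (rule ccontr)
        assume "\<not> J'L \<theta> \<omega> < \<infinity>"
        then have "J'L \<theta> \<omega> = \<infinity>" by simp
        with s1 have "JL \<theta> \<omega> = \<infinity>" by simp
        with elim(7) show False by simp
      qed
      have af: "\<bar>J'L \<theta> \<omega>\<bar> \<noteq> \<infinity>" using fin' elim(6) by auto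
      have c1: "\<xi> \<theta> \<omega> \<le> JL \<theta> \<omega> - J'L \<theta> \<omega>" by (rule C1[OF s1 af])
      have "(SUP n. J n \<theta> \<omega> + - J'L \<theta> \<omega>) \<le> \<zeta> \<theta> \<omega>"
      proof (rule SUP_least)
        fix n
        have "J n \<theta> \<omega> - \<zeta> \<theta> \<omega> \<le> J' (Suc n) \<theta> \<omega>" using elim(2) by blast
        also have "\<dots> \<le> J'L \<theta> \<omega>" unfolding elim(4) by (rule SUP_upper) simp
        finally have "J n \<theta> \<omega> - J'L \<theta> \<omega> \<le> \<zeta> \<theta> \<omega>" by (rule C2[OF _ af])
        then show "J n \<theta> \<omega> + - J'L \<theta> \<omega> \<le> \<zeta> \<theta> \<omega>" by (simp add: minus_ereal_def)
      qed
      moreover have "(SUP n. J n \<theta> \<omega> + - J'L \<theta> \<omega>) = JL \<theta> \<omega> + - J'L \<theta> \<omega>"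
        unfolding elim(3) using af by (intro SUP_ereal_add_left) auto
      ultimately have c2: "JL \<theta> \<omega> - J'L \<theta> \<omega> \<le> \<zeta> \<theta> \<omega>" by (simp add: minus_ereal_def)
      show ?case using fin' c1 c2 by blast
    qed
  qed
  show "AE \<omega> in M. J'L (\<lambda>_. 0) \<omega> < \<infinity>" using main[OF zero_ST] by (auto elim!: eventually_mono)
  show "AE \<omega> in M. \<xi> \<theta> \<omega> \<le> JL \<theta> \<omega> - J'L \<theta> \<omega> \<and> JL \<theta> \<omega> - J'L \<theta> \<omega> \<le> \<zeta> \<theta> \<omega>" if "\<theta> \<in> STs M F Tm" for \<theta>
    using main[OF that] by (auto elim!: eventually_mono)
qed

lemma bound:
  assumes sH: "supermart_family M F Tm H" and sH': "supermart_family M F Tm H'"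
    and nn: "\<forall>\<theta>\<in>STs M F Tm. AE \<omega> in M. 0 \<le> H \<theta> \<omega> \<and> 0 \<le> H' \<theta> \<omega>"
    and cons: "\<forall>\<theta>\<in>STs M F Tm. AE \<omega> in M. \<xi> \<theta> \<omega> \<le> H \<theta> \<omega> - H' \<theta> \<omega> \<and> H \<theta> \<omega> - H' \<theta> \<omega> \<le> \<zeta> \<theta> \<omega>"
  shows "\<forall>\<theta>\<in>STs M F Tm. (AE \<omega> in M. J n \<theta> \<omega> \<le> H \<theta> \<omega>) \<and> (AE \<omega> in M. J' n \<theta> \<omega> \<le> H' \<theta> \<omega>)"
proof (induction n)
  case 0
  show ?case unfolding J_0 J'_0 using nn by (auto elim!: eventually_mono)
next
  case (Suc n)
  have admH: "admissible M F Tm H" and admH': "admissible M F Tm H'"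
    using sH sH' unfolding supermart_family_def by blast+
  show ?case
  proof (intro ballI conjI)
    fix \<theta> assume th: "\<theta> \<in> STs M F Tm"
    interpret S: sigma_finite_subalgebra M "Fsig M F \<theta>" by (rule sfs[OF th])
    show "AE \<omega> in M. J (Suc n) \<theta> \<omega> \<le> H \<theta> \<omega>"
      unfolding J_Suc
    proof (rule Vf_least[OF th adm_meas[OF admH th]])
      fix \<tau> assume tF: "\<tau> \<in> STs_from M F Tm \<theta>"
      then have t: "\<tau> \<in> STs M F Tm" and ta: "AE \<omega> in M. \<theta> \<omega> \<le> \<tau> \<omega>" using STs_fromD by auto
      have "AE \<omega> in M. J' n \<tau> \<omega> + \<xi> \<tau> \<omega> \<le> H \<tau> \<omega>"
        using conjunct2[OF Suc[rule_format, OF t]] cons[rule_format, OF t] nn[rule_format, OF t] zeta_fin[OF t] xi_fin[OF t]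
        by eventually_elim (rule L1, auto)
      then have "AE \<omega> in M. ereal_cond_exp M (Fsig M F \<theta>) (\<lambda>\<omega>. J' n \<tau> \<omega> + \<xi> \<tau> \<omega>) \<omega> \<le> ereal_cond_exp M (Fsig M F \<theta>) (H \<tau>) \<omega>"
        by (rule S.ce_mono[OF Xm1[OF t] adm_measM[OF admH t]])
      moreover have "AE \<omega> in M. ereal_cond_exp M (Fsig M F \<theta>) (H \<tau>) \<omega> \<le> H \<theta> \<omega>"
        by (rule supermartD[OF sH t th ta])
      ultimately show "AE \<omega> in M. ereal_cond_exp M (Fsig M F \<theta>) (\<lambda>\<omega>. J' n \<tau> \<omega> + \<xi> \<tau> \<omega>) \<omega> \<le> H \<theta> \<omega>"
        by eventually_elim (rule order_trans)
    qed
    show "AE \<omega> in M. J' (Suc n) \<theta> \<omega> \<le> H' \<theta> \<omega>"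
      unfolding J'_Suc
    proof (rule Vf_least[OF th adm_meas[OF admH' th]])
      fix \<tau> assume tF: "\<tau> \<in> STs_from M F Tm \<theta>"
      then have t: "\<tau> \<in> STs M F Tm" and ta: "AE \<omega> in M. \<theta> \<omega> \<le> \<tau> \<omega>" using STs_fromD by auto
      have "AE \<omega> in M. J n \<tau> \<omega> - \<zeta> \<tau> \<omega> \<le> H' \<tau> \<omega>"
        using conjunct1[OF Suc[rule_format, OF t]] cons[rule_format, OF t] nn[rule_format, OF t] zeta_fin[OF t] xi_fin[OF t]
        by eventually_elim (rule L2, auto)
      then have "AE \<omega> in M. ereal_cond_exp M (Fsig M F \<theta>) (\<lambda>\<omega>. J n \<tau> \<omega> - \<zeta> \<tau> \<omega>) \<omega> \<le> ereal_cond_exp M (Fsig M F \<theta>) (H' \<tau>) \<omega>"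
        by (rule S.ce_mono[OF Xm2[OF t] adm_measM[OF admH' t]])
      moreover have "AE \<omega> in M. ereal_cond_exp M (Fsig M F \<theta>) (H' \<tau>) \<omega> \<le> H' \<theta> \<omega>"
        by (rule supermartD[OF sH' t th ta])
      ultimately show "AE \<omega> in M. ereal_cond_exp M (Fsig M F \<theta>) (\<lambda>\<omega>. J n \<tau> \<omega> - \<zeta> \<tau> \<omega>) \<omega> \<le> H' \<theta> \<omega>"
        by eventually_elim (rule order_trans)
    qed
  qed
qed

lemma bound_fin:
  assumes sH: "supermart_family M F Tm H" and sH': "supermart_family M F Tm H'"
    and nn: "\<forall>\<theta>\<in>STs M F Tm. AE \<omega> in M. 0 \<le> H \<theta> \<omega> \<and> 0 \<le> H' \<theta> \<omega>"
    and cons: "\<forall>\<theta>\<in>STs M F Tm. AE \<omega> in M. \<xi> \<theta> \<omega> \<le> H \<theta> \<omega> - H' \<theta> \<omega> \<and> H \<theta> \<omega> - H' \<theta> \<omega> \<le> \<zeta> \<theta> \<omega>"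
    and fin: "AE \<omega> in M. H (\<lambda>_. 0) \<omega> < \<infinity>"
  shows "AE \<omega> in M. JL (\<lambda>_. 0) \<omega> < \<infinity>"
proof -
  have "AE \<omega> in M. \<forall>n. J n (\<lambda>_. 0) \<omega> \<le> H (\<lambda>_. 0) \<omega>"
    unfolding AE_all_countable using bound[OF sH sH' nn cons] zero_ST by blast
  with JL_props(2)[OF zero_ST] fin show ?thesis
  proof eventually_elim
    case (elim \<omega>)
    have "(SUP n. J n (\<lambda>_. 0) \<omega>) \<le> H (\<lambda>_. 0) \<omega>" using elim(3) by (intro SUP_least) auto
    then have "JL (\<lambda>_. 0) \<omega> \<le> H (\<lambda>_. 0) \<omega>" using elim(1) by simp
    then show ?case using elim(2) by (rule le_less_trans)
  qed
qed

lemma bound_fin':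
  assumes sH: "supermart_family M F Tm H" and sH': "supermart_family M F Tm H'"
    and nn: "\<forall>\<theta>\<in>STs M F Tm. AE \<omega> in M. 0 \<le> H \<theta> \<omega> \<and> 0 \<le> H' \<theta> \<omega>"
    and cons: "\<forall>\<theta>\<in>STs M F Tm. AE \<omega> in M. \<xi> \<theta> \<omega> \<le> H \<theta> \<omega> - H' \<theta> \<omega> \<and> H \<theta> \<omega> - H' \<theta> \<omega> \<le> \<zeta> \<theta> \<omega>"
    and fin: "AE \<omega> in M. H' (\<lambda>_. 0) \<omega> < \<infinity>"
  shows "AE \<omega> in M. JL (\<lambda>_. 0) \<omega> < \<infinity>"
proof (rule bound_fin[OF sH sH' nn cons])
  show "AE \<omega> in M. H (\<lambda>_. 0) \<omega> < \<infinity>"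
    using fin cons[rule_format, OF zero_ST] nn[rule_format, OF zero_ST] zeta_fin[OF zero_ST]
  proof eventually_elim
    case (elim \<omega>)
    show ?case by (rule C3[where h'="H' (\<lambda>_. 0) \<omega>" and z="\<zeta> (\<lambda>_. 0) \<omega>"]) (use elim in auto)
  qed
qed

end

lemma Jpair_swap:
  "Jpair M F Tm (\<lambda>\<theta> \<omega>. - \<zeta> \<theta> \<omega>) (\<lambda>\<theta> \<omega>. - \<xi> \<theta> \<omega>) n = (snd (Jpair M F Tm \<xi> \<zeta> n), fst (Jpair M F Tm \<xi> \<zeta> n))"
  by (induction n) (simp_all add: minus_ereal_def)

lemma Jlim_swap: "Jlim M F Tm (\<lambda>\<theta> \<omega>. - \<zeta> \<theta> \<omega>) (\<lambda>\<theta> \<omega>. - \<xi> \<theta> \<omega>) = J'lim M F Tm \<xi> \<zeta>"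
  and J'lim_swap: "J'lim M F Tm (\<lambda>\<theta> \<omega>. - \<zeta> \<theta> \<omega>) (\<lambda>\<theta> \<omega>. - \<xi> \<theta> \<omega>) = Jlim M F Tm \<xi> \<zeta>"
  unfolding Jlim_def J'lim_def Jn_def J'n_def Jpair_swap by simp_all

lemma adm_uminus: "admissible M F Tm A \<Longrightarrow> admissible M F Tm (\<lambda>\<tau> \<omega>. - A \<tau> \<omega>)"
  unfolding admissible_def
proof (intro conjI ballI, goal_cases)
  case (1 \<theta>)
  then have [measurable]: "A \<theta> \<in> borel_measurable (Fsig M F \<theta>)" by blast
  show ?case by measurable
next
  case (2 \<theta> \<theta>')
  then have "AE \<omega> in M. \<theta> \<omega> = \<theta>' \<omega> \<longrightarrow> A \<theta> \<omega> = A \<theta>' \<omega>" by blast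
  then show ?case by eventually_elim auto
qed

lemma game_swap:
  assumes "game M F Tm \<xi> \<zeta>"
  shows "game M F Tm (\<lambda>\<theta> \<omega>. - \<zeta> \<theta> \<omega>) (\<lambda>\<theta> \<omega>. - \<xi> \<theta> \<omega>)"
proof -
  interpret game M F Tm \<xi> \<zeta> by (rule assms)
  show ?thesis
  proof (intro game.intro game_axioms.intro)
    show "stdset M F Tm" by (rule stdset_axioms)
    show "admissible M F Tm (\<lambda>\<theta> \<omega>. - \<zeta> \<theta> \<omega>)" by (rule adm_uminus[OF adm_zeta])
    show "admissible M F Tm (\<lambda>\<theta> \<omega>. - \<xi> \<theta> \<omega>)" by (rule adm_uminus[OF adm_xi])
    show "neg_part_integrable M F Tm (\<lambda>\<theta> \<omega>. - \<zeta> \<theta> \<omega>)"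
      using zeta_pos unfolding neg_part_integrable_def pos_part_integrable_def by simp
    show "pos_part_integrable M F Tm (\<lambda>\<theta> \<omega>. - \<xi> \<theta> \<omega>)"
      using xi_neg unfolding neg_part_integrable_def pos_part_integrable_def by simp
    show "AE \<omega> in M. - \<zeta> (\<lambda>_. Tm) \<omega> = 0" using zeta_T by eventually_elim simp
    show "AE \<omega> in M. - \<xi> (\<lambda>_. Tm) \<omega> = 0" using xi_T by eventually_elim simp
  qed
qed

theorem proposition2p7:
  fixes M :: "'a measure" and F :: "real \<Rightarrow> 'a measure" and Tm :: real
    and \<xi> \<zeta> :: "'a family"
  assumes setting: "std_setting M F Tm"
    and adm_xi: "admissible M F Tm \<xi>" and adm_zeta: "admissible M F Tm \<zeta>"
    and xi_neg: "neg_part_integrable M F Tm \<xi>"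
    and zeta_pos: "pos_part_integrable M F Tm \<zeta>"
    and xi_T: "AE \<omega> in M. \<xi> (\<lambda>_. Tm) \<omega> = 0"
    and zeta_T: "AE \<omega> in M. \<zeta> (\<lambda>_. Tm) \<omega> = 0"
  shows "((AE \<omega> in M. Jlim M F Tm \<xi> \<zeta> (\<lambda>_. 0) \<omega> < \<infinity>)
            \<longleftrightarrow> (AE \<omega> in M. J'lim M F Tm \<xi> \<zeta> (\<lambda>_. 0) \<omega> < \<infinity>))
       \<and> ((AE \<omega> in M. Jlim M F Tm \<xi> \<zeta> (\<lambda>_. 0) \<omega> < \<infinity>)
            \<longleftrightarrow> (\<exists>H H'. supermart_family M F Tm H \<and> supermart_family M F Tm H'
                  \<and> (\<forall>\<theta>\<in>STs M F Tm. AE \<omega> in M. 0 \<le> H \<theta> \<omega> \<and> 0 \<le> H' \<theta> \<omega>)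
                  \<and> (AE \<omega> in M. H (\<lambda>_. 0) \<omega> < \<infinity>)
                  \<and> (\<forall>\<theta>\<in>STs M F Tm. AE \<omega> in M.
                        \<xi> \<theta> \<omega> \<le> H \<theta> \<omega> - H' \<theta> \<omega> \<and> H \<theta> \<omega> - H' \<theta> \<omega> \<le> \<zeta> \<theta> \<omega>)))
       \<and> ((AE \<omega> in M. Jlim M F Tm \<xi> \<zeta> (\<lambda>_. 0) \<omega> < \<infinity>)
            \<longleftrightarrow> (\<exists>H H'. supermart_family M F Tm H \<and> supermart_family M F Tm H'
                  \<and> (\<forall>\<theta>\<in>STs M F Tm. AE \<omega> in M. 0 \<le> H \<theta> \<omega> \<and> 0 \<le> H' \<theta> \<omega>)
                  \<and> (AE \<omega> in M. H' (\<lambda>_. 0) \<omega> < \<infinity>)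
                  \<and> (\<forall>\<theta>\<in>STs M F Tm. AE \<omega> in M.
                        \<xi> \<theta> \<omega> \<le> H \<theta> \<omega> - H' \<theta> \<omega> \<and> H \<theta> \<omega> - H' \<theta> \<omega> \<le> \<zeta> \<theta> \<omega>)))"
proof -
  have G: "game M F Tm \<xi> \<zeta>"
    by (intro game.intro game_axioms.intro stdset.intro setting adm_xi adm_zeta xi_neg zeta_pos xi_T zeta_T)
  interpret game M F Tm \<xi> \<zeta> by (rule G)
  interpret W: game M F Tm "\<lambda>\<theta> \<omega>. - \<zeta> \<theta> \<omega>" "\<lambda>\<theta> \<omega>. - \<xi> \<theta> \<omega>" by (rule game_swap[OF G])
  let ?P1 = "AE \<omega> in M. Jlim M F Tm \<xi> \<zeta> (\<lambda>_. 0) \<omega> < \<infinity>"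
  let ?P2 = "AE \<omega> in M. J'lim M F Tm \<xi> \<zeta> (\<lambda>_. 0) \<omega> < \<infinity>"
  have nnJ: "\<forall>\<theta>\<in>STs M F Tm. AE \<omega> in M. 0 \<le> JL \<theta> \<omega> \<and> 0 \<le> J'L \<theta> \<omega>"
  proof
    fix \<theta> assume th: "\<theta> \<in> STs M F Tm"
    from JL_props(3)[OF th] J'L_props(3)[OF th] show "AE \<omega> in M. 0 \<le> JL \<theta> \<omega> \<and> 0 \<le> J'L \<theta> \<omega>"
      by eventually_elim simp
  qed
  have 12: "?P1 \<Longrightarrow> ?P2" by (rule construct(1))
  have 21: "?P2 \<Longrightarrow> ?P1"
  proof -
    assume "?P2"
    then have "AE \<omega> in M. Jlim M F Tm (\<lambda>\<theta> \<omega>. - \<zeta> \<theta> \<omega>) (\<lambda>\<theta> \<omega>. - \<xi> \<theta> \<omega>) (\<lambda>_. 0) \<omega> < \<infinity>"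
      by (simp add: Jlim_swap)
    then have "AE \<omega> in M. J'lim M F Tm (\<lambda>\<theta> \<omega>. - \<zeta> \<theta> \<omega>) (\<lambda>\<theta> \<omega>. - \<xi> \<theta> \<omega>) (\<lambda>_. 0) \<omega> < \<infinity>"
      by (rule W.construct(1))
    then show ?P1 by (simp add: J'lim_swap)
  qed
  have cons: "?P1 \<Longrightarrow> \<forall>\<theta>\<in>STs M F Tm. AE \<omega> in M. \<xi> \<theta> \<omega> \<le> JL \<theta> \<omega> - J'L \<theta> \<omega> \<and> JL \<theta> \<omega> - J'L \<theta> \<omega> \<le> \<zeta> \<theta> \<omega>"
    using construct(2) by blast
  show ?thesis
  proof (intro conjI iffI)
    show "?P1 \<Longrightarrow> ?P2" by (rule 12)
    show "?P2 \<Longrightarrow> ?P1" by (rule 21)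
  next
    assume p: ?P1
    show "\<exists>H H'. supermart_family M F Tm H \<and> supermart_family M F Tm H'
                  \<and> (\<forall>\<theta>\<in>STs M F Tm. AE \<omega> in M. 0 \<le> H \<theta> \<omega> \<and> 0 \<le> H' \<theta> \<omega>)
                  \<and> (AE \<omega> in M. H (\<lambda>_. 0) \<omega> < \<infinity>)
                  \<and> (\<forall>\<theta>\<in>STs M F Tm. AE \<omega> in M.
                        \<xi> \<theta> \<omega> \<le> H \<theta> \<omega> - H' \<theta> \<omega> \<and> H \<theta> \<omega> - H' \<theta> \<omega> \<le> \<zeta> \<theta> \<omega>)"
      using JL_sm J'L_sm nnJ p cons[OF p] by blast
  next
    assume "\<exists>H H'. supermart_family M F Tm H \<and> supermart_family M F Tm H'
                  \<and> (\<forall>\<theta>\<in>STs M F Tm. AE \<omega> in M. 0 \<le> H \<theta> \<omega> \<and> 0 \<le> H' \<theta> \<omega>)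
                  \<and> (AE \<omega> in M. H (\<lambda>_. 0) \<omega> < \<infinity>)
                  \<and> (\<forall>\<theta>\<in>STs M F Tm. AE \<omega> in M.
                        \<xi> \<theta> \<omega> \<le> H \<theta> \<omega> - H' \<theta> \<omega> \<and> H \<theta> \<omega> - H' \<theta> \<omega> \<le> \<zeta> \<theta> \<omega>)"
    then obtain H H' where h: "supermart_family M F Tm H" "supermart_family M F Tm H'"
      "\<forall>\<theta>\<in>STs M F Tm. AE \<omega> in M. 0 \<le> H \<theta> \<omega> \<and> 0 \<le> H' \<theta> \<omega>"
      "AE \<omega> in M. H (\<lambda>_. 0) \<omega> < \<infinity>"
      "\<forall>\<theta>\<in>STs M F Tm. AE \<omega> in M. \<xi> \<theta> \<omega> \<le> H \<theta> \<omega> - H' \<theta> \<omega> \<and> H \<theta> \<omega> - H' \<theta> \<omega> \<le> \<zeta> \<theta> \<omega>"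
      by blast
    show ?P1 by (rule bound_fin[OF h(1,2,3,5,4)])
  next
    assume p: ?P1
    show "\<exists>H H'. supermart_family M F Tm H \<and> supermart_family M F Tm H'
                  \<and> (\<forall>\<theta>\<in>STs M F Tm. AE \<omega> in M. 0 \<le> H \<theta> \<omega> \<and> 0 \<le> H' \<theta> \<omega>)
                  \<and> (AE \<omega> in M. H' (\<lambda>_. 0) \<omega> < \<infinity>)
                  \<and> (\<forall>\<theta>\<in>STs M F Tm. AE \<omega> in M.
                        \<xi> \<theta> \<omega> \<le> H \<theta> \<omega> - H' \<theta> \<omega> \<and> H \<theta> \<omega> - H' \<theta> \<omega> \<le> \<zeta> \<theta> \<omega>)"
      using JL_sm J'L_sm nnJ 12[OF p] cons[OF p] by blast
  next
    assume "\<exists>H H'. supermart_family M F Tm H \<and> supermart_family M F Tm H'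
                  \<and> (\<forall>\<theta>\<in>STs M F Tm. AE \<omega> in M. 0 \<le> H \<theta> \<omega> \<and> 0 \<le> H' \<theta> \<omega>)
                  \<and> (AE \<omega> in M. H' (\<lambda>_. 0) \<omega> < \<infinity>)
                  \<and> (\<forall>\<theta>\<in>STs M F Tm. AE \<omega> in M.
                        \<xi> \<theta> \<omega> \<le> H \<theta> \<omega> - H' \<theta> \<omega> \<and> H \<theta> \<omega> - H' \<theta> \<omega> \<le> \<zeta> \<theta> \<omega>)"
    then obtain H H' where h: "supermart_family M F Tm H" "supermart_family M F Tm H'"
      "\<forall>\<theta>\<in>STs M F Tm. AE \<omega> in M. 0 \<le> H \<theta> \<omega> \<and> 0 \<le> H' \<theta> \<omega>"
      "AE \<omega> in M. H' (\<lambda>_. 0) \<omega> < \<infinity>"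
      "\<forall>\<theta>\<in>STs M F Tm. AE \<omega> in M. \<xi> \<theta> \<omega> \<le> H \<theta> \<omega> - H' \<theta> \<omega> \<and> H \<theta> \<omega> - H' \<theta> \<omega> \<le> \<zeta> \<theta> \<omega>"
      by blast
    show ?P1 by (rule bound_fin'[OF h(1,2,3,5,4)])
  qed
qed

end
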